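(* Let $T$ be a tree with $n+1$ unlabeled vertices and $n$ directed edges labeled $1,\dots,n$, and let $I_T\in H_{2,n}$ be the corresponding monomial ideal. Then the dimension of the tangent space of $H_{2,n}$ at $I_T$ equals $\sum_v f(\deg(v))$, the sum over all vertices $v$ of $T$, where $f(a)=3(a-1)$ if $1\le a\le 3$ and $f(a)=a(a-1)$ if $a\ge 3$.
   Context: Over a field $K$, let $X=\begin{bmatrix}x_1&\cdots&x_n\\ y_1&\cdots&y_n\end{bmatrix}$, $K[X]$ $\mathbb{Z}^n$-graded by $\deg x_i=\deg y_i=e_i$. $H_{2,n}$ is the multigraded Hilbert scheme of $\mathbb{Z}^n$-homogeneous ideals $I$ with $\dim_K(K[X]/I)_u=u_1+\cdots+u_n+1$ for all $u\in\mathbb{N}^n$; its tangent space at $I$ is $\mathrm{Hom}_{K[X]}(I,K[X]/I)_0$. For distinct $i,j$, set $z_{ij}=x_j$ if the directed edge $j$ points away from edge $i$ (the tail of $j$ is the endpoint of $j$ closer to edge $i$), and $z_{ij}=y_j$ otherwise; $I_T=\langle z_{ij}z_{ji}:1\le i<j\le n\rangle$. *)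

theory Defs
  imports Complex_Main "HOL-Library.Poly_Mapping" "HOL-Library.Function_Algebras"
begin

definition adj_without :: "('e \<Rightarrow> 'v) \<Rightarrow> ('e \<Rightarrow> 'v) \<Rightarrow> 'e set \<Rightarrow> ('v \<times> 'v) set" where
  "adj_without tail head D = {(tail e, head e) | e. e \<notin> D} \<union> {(head e, tail e) | e. e \<notin> D}"

text \<open>Connected in the undirected sense, and acyclic: every edge is a bridge
  (its endpoints are disconnected after deleting it; this also excludes loops
  and multiple edges).\<close>

definition is_tree :: "('e \<Rightarrow> 'v) \<Rightarrow> ('e \<Rightarrow> 'v) \<Rightarrow> bool" where
  "is_tree tail head \<longleftrightarrow>
     (\<forall>u v. (u, v) \<in> (adj_without tail head {})\<^sup>*) \<and>
     (\<forall>e. (tail e, head e) \<notin> (adj_without tail head {e})\<^sup>*)"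

definition vdeg :: "('e::finite \<Rightarrow> 'v) \<Rightarrow> ('e \<Rightarrow> 'v) \<Rightarrow> 'v \<Rightarrow> nat" where
  "vdeg tail head v = card {e. tail e = v} + card {e. head e = v}"

text \<open>The tail of edge j is the endpoint of j closer to edge i (i \<noteq> j): in a tree
  this is the endpoint lying in the same component of T - j as edge i.\<close>

definition tail_closer :: "('e \<Rightarrow> 'v) \<Rightarrow> ('e \<Rightarrow> 'v) \<Rightarrow> 'e \<Rightarrow> 'e \<Rightarrow> bool" where
  "tail_closer tail head i j \<longleftrightarrow> (tail j, tail i) \<in> (adj_without tail head {j})\<^sup>*"

datatype 'e var = X 'e | Y 'e

type_synonym 'e monom = "'e var \<Rightarrow>\<^sub>0 nat"
type_synonym ('e, 'k) mpoly = "'e monom \<Rightarrow>\<^sub>0 'k"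

definition pvar :: "'e var \<Rightarrow> ('e, 'k::comm_ring_1) mpoly" where
  "pvar v = Poly_Mapping.single (Poly_Mapping.single v 1) 1"

definition smult_mp :: "'k::comm_ring_1 \<Rightarrow> ('e, 'k) mpoly \<Rightarrow> ('e, 'k) mpoly" where
  "smult_mp c p = Poly_Mapping.map ((*) c) p"

definition mdeg :: "'e monom \<Rightarrow> 'e \<Rightarrow> nat" where
  "mdeg m e = Poly_Mapping.lookup m (X e) + Poly_Mapping.lookup m (Y e)"

definition homogeneous :: "('e \<Rightarrow> nat) \<Rightarrow> ('e, 'k::zero) mpoly \<Rightarrow> bool" where
  "homogeneous u p \<longleftrightarrow> (\<forall>m\<in>Poly_Mapping.keys p. mdeg m = u)"

definition ideal_gen :: "('e, 'k::comm_ring_1) mpoly set \<Rightarrow> ('e, 'k) mpoly set" where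
  "ideal_gen S = module.span ((*) :: ('e, 'k) mpoly \<Rightarrow> _) S"

definition zvar :: "('e \<Rightarrow> 'v) \<Rightarrow> ('e \<Rightarrow> 'v) \<Rightarrow> 'e \<Rightarrow> 'e \<Rightarrow> 'e var" where
  "zvar tail head i j = (if tail_closer tail head i j then X j else Y j)"

definition I_T :: "('e \<Rightarrow> 'v) \<Rightarrow> ('e \<Rightarrow> 'v) \<Rightarrow> ('e, 'k::comm_ring_1) mpoly set" where
  "I_T tail head = ideal_gen {pvar (zvar tail head i j) * pvar (zvar tail head j i) | i j. i \<noteq> j}"

text \<open>For a monomial ideal I, R/I is modelled (as K-vector space and R-module)
  by the K-span of the standard monomials (monomials not in I); qproj is the
  projection R \<rightarrow> R/I, whose kernel is I, and r\<cdot>[q] = qproj (r*q).\<close>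

definition qproj :: "('e, 'k::comm_ring_1) mpoly set \<Rightarrow> ('e, 'k) mpoly \<Rightarrow> ('e, 'k) mpoly" where
  "qproj I p = (\<Sum>m\<in>{m\<in>Poly_Mapping.keys p. Poly_Mapping.single m 1 \<notin> I}. Poly_Mapping.single m (Poly_Mapping.lookup p m))"

text \<open>Degree-0 R-module homomorphisms I \<rightarrow> R/I, as functions on R vanishing off I.\<close>

definition tangent_hom :: "('e, 'k::comm_ring_1) mpoly set \<Rightarrow> (('e, 'k) mpoly \<Rightarrow> ('e, 'k) mpoly) set" where
  "tangent_hom I = {\<phi>.
     (\<forall>p. p \<notin> I \<longrightarrow> \<phi> p = 0) \<and>
     (\<forall>p\<in>I. qproj I (\<phi> p) = \<phi> p) \<and>
     (\<forall>p\<in>I. \<forall>q\<in>I. \<phi> (p + q) = \<phi> p + \<phi> q) \<and>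
     (\<forall>r. \<forall>p\<in>I. \<phi> (r * p) = qproj I (r * \<phi> p)) \<and>
     (\<forall>u. \<forall>p\<in>I. homogeneous u p \<longrightarrow> homogeneous u (\<phi> p))}"

definition tangent_dim :: "('e, 'k::field) mpoly set \<Rightarrow> nat" where
  "tangent_dim I = vector_space.dim (\<lambda>c \<phi> p. smult_mp c (\<phi> p)) (tangent_hom I)"

definition f_loc :: "nat \<Rightarrow> nat" where
  "f_loc a = (if a \<le> 3 then 3 * (a - 1) else a * (a - 1))"

end

theory Submission
  imports Defs
begin

locale tree =
  fixes tail head :: "'e::finite \<Rightarrow> 'v"
  assumes istree: "is_tree tail head"
begin

definition R :: "'e set \<Rightarrow> 'v \<Rightarrow> 'v \<Rightarrow> bool" where
  "R D x y \<longleftrightarrow> (x, y) \<in> (adj_without tail head D)\<^sup>*"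

definition inc :: "'e \<Rightarrow> 'v \<Rightarrow> bool" where
  "inc e x \<longleftrightarrow> tail e = x \<or> head e = x"

definition S :: "'e \<Rightarrow> 'e \<Rightarrow> bool" where
  "S a b \<longleftrightarrow> tail_closer tail head a b"

lemma S_R: "S a b = R {b} (tail b) (tail a)"
  by (simp add: S_def tail_closer_def R_def)

lemma R_refl[simp]: "R D x x" by (simp add: R_def)

lemma adj_sym: "(x,y) \<in> adj_without tail head D \<Longrightarrow> (y,x) \<in> adj_without tail head D"
  by (auto simp: adj_without_def)

lemma R_sym: "R D x y \<Longrightarrow> R D y x"
  unfolding R_def
proof (induction rule: rtrancl_induct)
  case base then show ?case by simp
next
  case (step y z)
  then show ?case by (meson adj_sym converse_rtrancl_into_rtrancl)
qed

lemma R_sym_iff: "R D x y = R D y x" using R_sym by blast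

lemma R_trans: "R D x y \<Longrightarrow> R D y z \<Longrightarrow> R D x z"
  unfolding R_def by (rule rtrancl_trans)

lemma R_mono: "D \<subseteq> D' \<Longrightarrow> R D' x y \<Longrightarrow> R D x y"
  unfolding R_def
proof -
  assume "D \<subseteq> D'"
  then have "adj_without tail head D' \<subseteq> adj_without tail head D"
    by (auto simp: adj_without_def)
  then show "(x, y) \<in> (adj_without tail head D')\<^sup>* \<Longrightarrow> (x, y) \<in> (adj_without tail head D)\<^sup>*"
    using rtrancl_mono by blast
qed

lemma R_edge: "e \<notin> D \<Longrightarrow> R D (tail e) (head e)"
  unfolding R_def adj_without_def by blast

lemma R_edge': "e \<notin> D \<Longrightarrow> inc e x \<Longrightarrow> inc e y \<Longrightarrow> R D x y"
  unfolding inc_def using R_edge R_sym by (metis R_refl)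

lemma R_split:
  "R D x y \<Longrightarrow> R (insert e D) x y \<or> R (insert e D) x (tail e) \<or> R (insert e D) x (head e)"
  unfolding R_def
proof (induction rule: rtrancl_induct)
  case base then show ?case by simp
next
  case (step y z)
  from step.hyps(2) obtain f where f: "f \<notin> D" "(y = tail f \<and> z = head f) \<or> (y = head f \<and> z = tail f)"
    unfolding adj_without_def by blast
  show ?case
  proof (cases "f = e")
    case True
    with step.IH f show ?thesis by auto
  next
    case False
    then have "(y,z) \<in> adj_without tail head (insert e D)"
      using f unfolding adj_without_def by blast
    with step.IH show ?thesis
      by (meson rtrancl.rtrancl_into_rtrancl)
  qed
qed

lemma conn: "R {} x y"
  using istree unfolding is_tree_def R_def by blast

lemma bridge: "\<not> R {e} (tail e) (head e)"
  using istree unfolding is_tree_def R_def by blast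

lemma no_loop: "tail e \<noteq> head e"
  using bridge by (metis R_refl)

lemma two_comp: "R {e} x (tail e) \<or> R {e} x (head e)"
  using R_split[OF conn[of x "tail e"], of e] by (auto simp: R_sym_iff)

lemma bridge': "inc e x \<Longrightarrow> inc e y \<Longrightarrow> x \<noteq> y \<Longrightarrow> \<not> R {e} x y"
  unfolding inc_def using bridge R_sym by blast



lemma not_R_trans: "\<not> R {e} x y \<Longrightarrow> \<not> R {e} x z \<Longrightarrow> R {e} y z"
  using two_comp[of e x] two_comp[of e y] two_comp[of e z] bridge
  by (metis R_sym R_trans)

lemma side_vertex: "a \<noteq> b \<Longrightarrow> inc a x \<Longrightarrow> S a b = R {b} (tail b) x"
  unfolding S_R
  by (metis R_edge' R_sym R_trans inc_def singletonD)


definition other :: "'e \<Rightarrow> 'v \<Rightarrow> 'v" where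
  "other e x = (if tail e = x then head e else tail e)"

lemma inc_other: "inc e (other e x)" by (simp add: other_def inc_def)
lemma other_ne: "inc e x \<Longrightarrow> other e x \<noteq> x"
  unfolding other_def inc_def by (metis no_loop)
lemma inc_cases: "inc e x \<Longrightarrow> inc e y \<Longrightarrow> y = x \<or> y = other e x"
  by (auto simp: other_def inc_def)

lemma bridge_other: "inc j t \<Longrightarrow> \<not> R {j} t (other j t)"
  using bridge' inc_other other_ne by metis

lemma vertex_branch_ex:
  "x = t \<or> (\<exists>j. inc j t \<and> R {j} (other j t) x)"
proof -
  have "(t, x) \<in> (adj_without tail head {})\<^sup>*" using conn unfolding R_def by blast
  then show ?thesis
  proof (induction rule: rtrancl_induct)
    case base then show ?case by simp
  next
    case (step y z)
    from step.hyps(2) obtain f where f: "inc f y" "inc f z" "z \<noteq> y \<or> True"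
      unfolding adj_without_def inc_def by blast
    from step.IH show ?case
    proof
      assume "y = t"
      then show ?thesis using f inc_cases[of f t z]
        by (metis R_refl)
    next
      assume "\<exists>j. inc j t \<and> R {j} (other j t) y"
      then obtain j where j: "inc j t" "R {j} (other j t) y" by blast
      show ?thesis
      proof (cases "f = j")
        case True
        then show ?thesis using f j inc_cases[of j t z] by (metis R_refl)
      next
        case False
        then have "R {j} y z" using f R_edge' by simp
        then show ?thesis using j R_trans by blast
      qed
    qed
  qed
qed

lemma vertex_branch_unique:
  assumes "inc j t" "inc j' t" "j \<noteq> j'" "\<not> R {j} t y" "\<not> R {j'} t y"
  shows False
proof -
  have o: "R {j} (other j t) y"
    using assms(4) not_R_trans[of j t "other j t" y] bridge_other[OF assms(1)] 
    by (metis other_ne assms(1))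
  from R_split[OF o, of j'] have "R {j', j} (other j t) y \<or> R {j', j} (other j t) (tail j') \<or> R {j', j} (other j t) (head j')"
    by (simp add: insert_commute)
  then show False
  proof (elim disjE)
    assume "R {j', j} (other j t) y"
    then have "R {j'} (other j t) y" using R_mono[of "{j'}" "{j',j}"] by blast
    moreover have "R {j'} t (other j t)" using assms R_edge' inc_other by simp
    ultimately show False using assms(5) R_trans by blast
  next
    assume a: "R {j', j} (other j t) (tail j')"
    have "R {j} (tail j') t" using assms R_edge'[of j' "{j}" "tail j'" t] by (auto simp: inc_def)
    then show False using R_mono[of "{j}" "{j',j}"] a R_trans bridge_other[OF assms(1)]
      by (metis R_sym insert_commute subset_insertI)
  next
    assume a: "R {j', j} (other j t) (head j')"
    have "R {j} (head j') t" using assms R_edge'[of j' "{j}" "head j'" t] by (auto simp: inc_def)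
    then show False using R_mono[of "{j}" "{j',j}"] a R_trans bridge_other[OF assms(1)]
      by (metis R_sym insert_commute subset_insertI)
  qed
qed

lemma vertex_branch:
  assumes "\<not> inc k t"
  shows "\<exists>!j. inc j t \<and> \<not> R {j} t (tail k)"
proof -
  have "tail k \<noteq> t" using assms by (simp add: inc_def)
  then obtain j where j: "inc j t" "R {j} (other j t) (tail k)"
    using vertex_branch_ex[of "tail k" t] by blast
  then have "\<not> R {j} t (tail k)"
    using bridge_other[OF j(1)] R_trans R_sym by blast
  with j(1) show ?thesis using vertex_branch_unique by blast
qed


lemma R_differ: "(R {e} z x \<noteq> R {e} z y) = (\<not> R {e} x y)"
  using not_R_trans R_trans R_sym by metis

definition xo :: "'e \<Rightarrow> 'e \<Rightarrow> 'v" where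
  "xo i k = (if S k i then tail i else head i)"

lemma xo_inc: "inc i (xo i k)" by (simp add: xo_def inc_def)

lemma xo_R: "R {i} (xo i k) (tail k)"
  unfolding xo_def S_R using two_comp R_sym by metis

definition br :: "'e \<Rightarrow> 'e \<Rightarrow> 'e" where
  "br i k = (if inc k (xo i k) then k else (THE j. inc j (xo i k) \<and> \<not> R {j} (xo i k) (tail k)))"

lemma BR1:
  assumes "k \<noteq> i"
  shows "inc (br i k) (xo i k) \<and> br i k \<noteq> i \<and> (br i k = k \<or> S i (br i k) \<noteq> S k (br i k))
     \<and> S (br i k) i = S k i"
proof (cases "inc k (xo i k)")
  case True
  then show ?thesis using assms by (simp add: br_def)
next
  case False
  define x where "x = xo i k"
  define j where "j = br i k"
  have jd: "j = (THE j. inc j x \<and> \<not> R {j} x (tail k))" using False by (simp add: j_def br_def x_def)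
  have "inc j x \<and> \<not> R {j} x (tail k)"
    unfolding jd by (rule theI') (use vertex_branch False x_def in simp)
  then have j: "inc j x" "\<not> R {j} x (tail k)" by auto
  have xi: "inc i x" "R {i} x (tail k)" using xo_inc xo_R x_def by auto
  have ji: "j \<noteq> i" using j xi by auto
  have jk: "j \<noteq> k" using j False x_def by auto
  have "S i j \<noteq> S k j"
    using side_vertex[OF ji[symmetric] xi(1)] S_R[of k j] R_differ j(2) by metis
  moreover have "S j i = S k i"
    using side_vertex[OF ji j(1)] S_R[of k i] xi(2) R_trans R_sym by metis
  ultimately show ?thesis using j ji x_def j_def by simp
qed

lemma BR2:
  assumes "k \<noteq> i" "i \<noteq> j" "inc i y" "inc j y" "j = k \<or> S i j \<noteq> S k j"
  shows "j = br i k"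
proof -
  define x where "x = xo i k"
  have xi: "inc i x" "R {i} x (tail k)" using xo_inc xo_R x_def by auto
  have "y = x \<or> y = other i x" using inc_cases[OF xi(1) assms(3)] .
  then show ?thesis
  proof
    assume yx: "y = x"
    show ?thesis
    proof (cases "j = k")
      case True
      then show ?thesis using assms yx x_def by (simp add: br_def)
    next
      case False
      with assms have d: "S i j \<noteq> S k j" by simp
      have nr: "\<not> R {j} x (tail k)"
        using side_vertex[OF assms(2) xi(1)] S_R[of k j] R_differ d by metis
      have nk: "\<not> inc k x"
      proof
        assume "inc k x"
        then have "S k j = R {j} (tail j) x" using side_vertex False by metis
        then show False using d side_vertex[OF assms(2) xi(1)] by simp
      qed
      have "(THE j. inc j x \<and> \<not> R {j} x (tail k)) = j"
        by (rule the1_equality) (use vertex_branch nk nr assms yx in auto)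
      then show ?thesis using nk x_def by (simp add: br_def)
    qed
  next
    assume ys: "y = other i x"
    define s where "s = other i x"
    have bs: "\<not> R {i} x s" using bridge_other[OF xi(1)] s_def by simp
    have si: "inc i s" "inc j s" using ys s_def assms inc_other by auto
    show ?thesis
    proof (cases "j = k")
      case True
      have "S k i = R {i} (tail i) s" using side_vertex assms True si by metis
      moreover have "S k i = R {i} (tail i) x" using S_R[of k i] xi(2) R_trans R_sym by metis
      ultimately show ?thesis using bs R_differ by metis
    next
      case False
      with assms have d: "S i j \<noteq> S k j" by simp
      have nr: "\<not> R {j} s (tail k)"
        using side_vertex[OF assms(2) si(1)] S_R[of k j] R_differ d by metis
      from R_split[OF xi(2), of j]
      have "R {j, i} x (tail k) \<or> R {j, i} x (tail j) \<or> R {j, i} x (head j)" by simp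
      then show ?thesis
      proof (elim disjE)
        assume "R {j, i} x (tail k)"
        then have "R {j} x (tail k)" using R_mono[of "{j}" "{j,i}"] by blast
        moreover have "R {j} s x" using R_edge'[of i "{j}" s x] assms si xi by auto
        ultimately show ?thesis using nr R_trans by blast
      next
        assume "R {j, i} x (tail j)"
        then have "R {i} x (tail j)" using R_mono[of "{i}" "{j,i}"] by blast
        moreover have "R {i} (tail j) s" using R_edge'[of j "{i}" "tail j" s] assms si by (auto simp: inc_def)
        ultimately show ?thesis using bs R_trans by blast
      next
        assume "R {j, i} x (head j)"
        then have "R {i} x (head j)" using R_mono[of "{i}" "{j,i}"] by blast
        moreover have "R {i} (head j) s" using R_edge'[of j "{i}" "head j" s] assms si by (auto simp: inc_def)
        ultimately show ?thesis using bs R_trans by blast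
      qed
    qed
  qed
qed

lemma BR3:
  assumes "i \<noteq> j" "i \<noteq> k" "j \<noteq> k" "S j i = S k i" "S i j \<noteq> S k j"
  shows "br i k = br i j"
proof -
  have xx: "xo i k = xo i j" using assms(4) by (simp add: xo_def)
  define x where "x = xo i j"
  define b where "b = br i j"
  have b: "inc b x" "b \<noteq> i" "b = j \<or> S i b \<noteq> S j b"
    using BR1[of j i] assms b_def x_def by auto
  have xi: "inc i x" using xo_inc x_def by auto
  have "b = k \<or> S i b \<noteq> S k b"
  proof (cases "b = j")
    case True then show ?thesis using assms by simp
  next
    case False
    show ?thesis
    proof (rule ccontr)
      assume c: "\<not> (b = k \<or> S i b \<noteq> S k b)"
      have sib: "S i b = R {b} (tail b) x" using side_vertex[OF b(2)[symmetric] xi] .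
      have r1: "R {b} x (tail k)" using c sib S_R[of k b] R_differ by metis
      have r2: "\<not> R {b} x (tail j)" using False b(3) sib S_R[of j b] R_differ by metis
      have r3: "\<not> R {j} x (tail k)" using side_vertex[OF assms(1) xi] assms(5) S_R[of k j] R_differ by metis
      from R_split[OF r1, of j]
      have "R {j, b} x (tail k) \<or> R {j, b} x (tail j) \<or> R {j, b} x (head j)" by simp
      then show False
      proof (elim disjE)
        assume "R {j, b} x (tail k)"
        then show False using R_mono[of "{j}" "{j,b}"] r3 by blast
      next
        assume "R {j, b} x (tail j)"
        then show False using R_mono[of "{b}" "{j,b}"] r2 by blast
      next
        assume "R {j, b} x (head j)"
        then have "R {b} x (head j)" using R_mono[of "{b}" "{j,b}"] by blast
        moreover have "R {b} (head j) (tail j)" using R_edge[of j "{b}"] False R_sym by auto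
        ultimately show False using r2 R_trans by blast
      qed
    qed
  qed
  then show ?thesis using BR2[of k i b x] assms b xi xx x_def b_def by metis
qed


lemma share_unique:
  assumes "i \<noteq> j" "inc i v" "inc j v" "inc i w" "inc j w"
  shows "v = w"
proof (rule ccontr)
  assume "v \<noteq> w"
  then have "\<not> R {i} v w" using bridge' assms by blast
  moreover have "R {i} v w" using R_edge'[of j "{i}" v w] assms by auto
  ultimately show False by blast
qed

lemma xo_adj:
  assumes "i \<noteq> j" "inc i v" "inc j v"
  shows "xo i j = v"
proof -
  have s: "S j i = R {i} (tail i) v" using side_vertex assms by metis
  show ?thesis
  proof (cases "S j i")
    case True
    then have "R {i} (tail i) v" using s by simp
    then have "v = tail i" using assms(2) bridge unfolding inc_def by auto
    then show ?thesis using True unfolding xo_def by simp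
  next
    case False
    then have "v \<noteq> tail i" using s by auto
    then show ?thesis using False assms(2) unfolding xo_def inc_def by auto
  qed
qed

lemma br_adj:
  assumes "i \<noteq> j" "inc i v" "inc j v"
  shows "br i j = j"
  using BR2[of j i j v] assms by simp

lemma br_adjacent:
  assumes "k \<noteq> i"
  shows "br i k \<noteq> i \<and> inc i (xo i k) \<and> inc (br i k) (xo i k)"
  using BR1[OF assms] xo_inc by simp

lemma BRsame:
  assumes "i \<noteq> j" "i \<noteq> k" "j \<noteq> k" "S j i = S k i" "\<not> (S i j = S k j \<and> S i k = S j k)"
  shows "br i j = br i k"
proof (cases "S i j = S k j")
  case True
  then have "S i k \<noteq> S j k" using assms(5) by blast
  then show ?thesis using BR3[of i k j, OF assms(2) assms(1) assms(3)[symmetric] assms(4)[symmetric]] by blast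
next
  case False
  then show ?thesis using BR3[of i j k, OF assms(1-4)] by simp
qed

lemma C1a:
  assumes "i \<noteq> j" "\<not> (\<exists>v. inc i v \<and> inc j v)"
  shows "\<exists>k. k \<noteq> i \<and> k \<noteq> j \<and> S j i = S k i \<and> S i k \<noteq> S j k"
proof -
  have b: "inc (br i j) (xo i j)" "br i j \<noteq> i" "br i j = j \<or> S i (br i j) \<noteq> S j (br i j)"
     "S (br i j) i = S j i"
    using BR1[OF not_sym[OF assms(1)]] by blast+
  have "br i j \<noteq> j"
  proof
    assume "br i j = j"
    then have "inc j (xo i j)" using b(1) by simp
    then show False using assms(2) xo_inc[of i j] by blast
  qed
  then show ?thesis using b(2,3,4) by blast
qed

lemma C1b:
  assumes "i \<noteq> j" "i \<noteq> k" "j \<noteq> k" "inc i v" "inc j v" "inc k v"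
  shows "S j i = S k i \<and> S i j = S k j"
  using side_vertex[of j i v] side_vertex[of k i v] side_vertex[of i j v] side_vertex[of k j v] assms by simp

lemma C2:
  assumes "i \<noteq> j" "inc i v" "inc j v" "\<forall>e. inc e v \<longrightarrow> e = i \<or> e = j"
    "k \<noteq> i" "k \<noteq> j" "S j i = S k i"
  shows "S i j \<noteq> S k j \<and> S i k = S j k"
proof -
  have 1: "S i k = S j k" using side_vertex[of i k v] side_vertex[of j k v] assms by simp
  have x: "xo i k = v" using xo_adj[OF assms(1-3)] assms(7) by (simp add: xo_def)
  have b: "inc (br i k) (xo i k)" "br i k \<noteq> i" "br i k = k \<or> S i (br i k) \<noteq> S k (br i k)"
    using BR1[OF assms(5)] by blast+
  have "br i k = j" using assms(4) b(1,2) x by metis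
  then have "S i j \<noteq> S k j" using b(3) assms(6) by metis
  with 1 show ?thesis by simp
qed

end

abbreviation lk where "lk \<equiv> Poly_Mapping.lookup"
abbreviation ks where "ks \<equiv> Poly_Mapping.keys"
abbreviation sg where "sg \<equiv> Poly_Mapping.single"

lemma lookup_minus_nat: "lk (f - g) k = lk f k - lk (g :: 'a \<Rightarrow>\<^sub>0 nat) k"
  by (simp add: minus_poly_mapping.rep_eq)

definition dv :: "('x \<Rightarrow>\<^sub>0 nat) \<Rightarrow> ('x \<Rightarrow>\<^sub>0 nat) \<Rightarrow> bool" where
  "dv a m \<longleftrightarrow> (\<exists>t. m = a + t)"

lemma dv_lookup: "dv a m \<longleftrightarrow> (\<forall>x. lk a x \<le> lk m x)"
proof
  assume "dv a m" then show "\<forall>x. lk a x \<le> lk m x"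
    by (auto simp: dv_def lookup_add)
next
  assume h: "\<forall>x. lk a x \<le> lk m x"
  have "m = a + (m - a)"
    by (rule poly_mapping_eqI) (use h in \<open>simp add: lookup_add lookup_minus_nat\<close>)
  then show "dv a m" unfolding dv_def by blast
qed

lemma dv_diff: "dv a m \<Longrightarrow> a + (m - a) = m"
  unfolding dv_def by auto

lemma dv_diff': "dv a m \<Longrightarrow> (m - a) + a = m"
  unfolding dv_def by (auto simp: add.commute)

lemma dv_add_left: "dv a m \<Longrightarrow> dv a (t + m)"
  unfolding dv_def by (metis add.left_commute)

lemma dv_refl[simp]: "dv a a" unfolding dv_def by (metis add.right_neutral)

lemma dv_plus[simp]: "dv a (a + t)" unfolding dv_def by blast

definition inI :: "'x monom set \<Rightarrow> 'x monom \<Rightarrow> bool" where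
  "inI G m \<longleftrightarrow> (\<exists>g\<in>G. dv g m)"

lemma inI_add: "inI G m \<Longrightarrow> inI G (t + m)"
  unfolding inI_def using dv_add_left by blast

lemma inI_add': "inI G m \<Longrightarrow> inI G (m + t)"
  using inI_add by (metis add.commute)

definition mideal :: "'x monom set \<Rightarrow> ('x, 'k::comm_ring_1) mpoly set" where
  "mideal G = ideal_gen ((\<lambda>g. sg g 1) ` G)"

lemma module_mpoly: "module ((*) :: ('x, 'k::comm_ring_1) mpoly \<Rightarrow> _)"
  by unfold_locales (auto simp: algebra_simps)

lemma keys_single_mult: "ks (sg a c * p) \<subseteq> (\<lambda>m. a + m) ` ks p"
  using keys_mult[of "sg a c" p] by (auto split: if_splits)

lemma poly_sum_single: "p = (\<Sum>m\<in>ks p. sg m (lk p m))"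
proof (rule poly_mapping_eqI)
  fix k
  show "lk p k = lk (\<Sum>m\<in>ks p. sg m (lk p m)) k"
    by (auto simp: lookup_sum lookup_single when_def in_keys_iff)
qed

lemma mem_mideal: "(p :: ('x, 'k::field) mpoly) \<in> mideal G \<longleftrightarrow> (\<forall>m\<in>ks p. inI G m)"
proof
  interpret M: module "(*) :: ('x, 'k) mpoly \<Rightarrow> _" by (rule module_mpoly)
  let ?T = "{p :: ('x, 'k) mpoly. \<forall>m\<in>ks p. inI G m}"
  have sub: "M.subspace ?T"
    unfolding M.subspace_def
  proof (intro conjI ballI allI)
    show "0 \<in> ?T" by simp
  next
    fix x y assume "x \<in> ?T" "y \<in> ?T"
    then show "x + y \<in> ?T" using keys_add[of x y] by auto
  next
    fix c x assume x: "x \<in> ?T"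
    show "c * x \<in> ?T"
    proof (intro CollectI ballI)
      fix m assume "m \<in> ks (c * x)"
      then obtain a b where "m = a + b" "b \<in> ks x" using keys_mult[of c x] by auto
      then show "inI G m" using x inI_add by auto
    qed
  qed
  have gens: "(\<lambda>g. sg g 1) ` G \<subseteq> ?T"
  proof (rule image_subsetI)
    fix g assume "g \<in> G"
    then have "inI G g" unfolding inI_def using dv_refl[of g] by blast
    then show "sg g 1 \<in> ?T" by simp
  qed
  assume "p \<in> mideal G"
  then show "\<forall>m\<in>ks p. inI G m"
    using M.span_minimal[OF gens sub] unfolding mideal_def ideal_gen_def by blast
next
  interpret M: module "(*) :: ('x, 'k) mpoly \<Rightarrow> _" by (rule module_mpoly)
  assume h: "\<forall>m\<in>ks p. inI G m"
  have "sg m (lk p m) \<in> M.span ((\<lambda>g. sg g 1) ` G)"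
    if mk: "m \<in> ks p" for m
  proof -
    obtain g where g: "g \<in> G" "dv g m" using h mk by (auto simp: inI_def)
    have "sg m (lk p m) = sg (m - g) (lk p m) * sg g 1"
      using dv_diff'[OF g(2)] by (simp add: mult_single)
    then show ?thesis using M.span_scale[OF M.span_base[of "sg g 1"]] g by auto
  qed
  then have "(\<Sum>m\<in>ks p. sg m (lk p m)) \<in> M.span ((\<lambda>g. sg g 1) ` G)"
    by (intro M.span_sum) auto
  then show "p \<in> mideal G" unfolding mideal_def ideal_gen_def using poly_sum_single[of p] by simp
qed


lemma single_mult_sum:
  "sg a c * p = (\<Sum>m\<in>ks p. sg (a + m) (c * lk p m))"
proof -
  have "sg a c * p = sg a c * (\<Sum>m\<in>ks p. sg m (lk p m))" using poly_sum_single[of p] by simp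
  also have "\<dots> = (\<Sum>m\<in>ks p. sg (a + m) (c * lk p m))"
    by (simp add: sum_distrib_left mult_single)
  finally show ?thesis .
qed

lemma lookup_single_mult:
  "lk (sg a c * p) M = (if dv a M then c * lk p (M - a) else 0)"
proof -
  have "lk (sg a c * p) M = (\<Sum>m\<in>ks p. (c * lk p m when a + m = M))"
    by (simp add: single_mult_sum lookup_sum lookup_single)
  also have "\<dots> = (if dv a M then c * lk p (M - a) else 0)"
  proof (cases "dv a M")
    case True
    then obtain t where t: "M = a + t" unfolding dv_def by blast
    have "(\<Sum>m\<in>ks p. (c * lk p m when a + m = M)) = (\<Sum>m\<in>ks p. (c * lk p m when m = t))"
      using t by (intro sum.cong) (auto simp: when_def)
    also have "\<dots> = c * lk p t"
      by (auto simp: when_def in_keys_iff)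
    finally show ?thesis using True t by simp
  next
    case False
    then have "\<And>m. a + m \<noteq> M" unfolding dv_def by metis
    then show ?thesis using False by simp
  qed
  finally show ?thesis .
qed

lemma lookup_smult[simp]: "lk (smult_mp c p) k = c * lk p k"
  by (simp add: smult_mp_def map.rep_eq when_def)

lemma smult_mp_conv: "smult_mp c p = sg 0 c * p"
  by (simp add: smult_mp_def mult_map_scale_conv_mult)

abbreviation qp :: "'x monom set \<Rightarrow> ('x, 'k::field) mpoly \<Rightarrow> ('x, 'k) mpoly" where
  "qp G \<equiv> qproj (mideal G)"

lemma single_in_mideal: "(sg m 1 :: ('x, 'k::field) mpoly) \<in> mideal G \<longleftrightarrow> inI G m"
  by (simp add: mem_mideal)

lemma lookup_qp: "lk (qp G p) M = (if inI G M then 0 else lk p M)"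
proof -
  have "lk (qp G p) M = (\<Sum>m\<in>{m \<in> ks p. \<not> inI G m}. (lk p m when m = M))"
    unfolding qproj_def by (simp add: lookup_sum lookup_single single_in_mideal when_def eq_commute)
  also have "\<dots> = (if inI G M then 0 else lk p M)"
    by (auto simp: when_def in_keys_iff)
  finally show ?thesis .
qed

lemma qp_add: "qp G (p + q) = qp G p + qp G q"
  by (rule poly_mapping_eqI) (simp add: lookup_qp lookup_add)

lemma qp_zero[simp]: "qp G 0 = 0"
  by (rule poly_mapping_eqI) (simp add: lookup_qp)

lemma qp_sum: "qp G (\<Sum>i\<in>A. f i) = (\<Sum>i\<in>A. qp G (f i))"
  by (rule poly_mapping_eqI) (simp add: lookup_qp lookup_sum)

lemma qp_smult: "qp G (sg 0 c * p) = sg 0 c * qp G p"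
  by (rule poly_mapping_eqI) (simp add: lookup_qp lookup_single_mult dv_def)

lemma qp_idem[simp]: "qp G (qp G p) = qp G p"
  by (rule poly_mapping_eqI) (simp add: lookup_qp)

lemma qp_zero_if: "(\<And>m. m \<in> ks p \<Longrightarrow> inI G m) \<Longrightarrow> qp G p = 0"
  by (rule poly_mapping_eqI) (auto simp: lookup_qp in_keys_iff)

lemma qp_mult_zero:
  assumes "\<And>m. m \<in> ks p \<Longrightarrow> inI G m"
  shows "qp G (r * p) = 0"
proof (rule qp_zero_if)
  fix m assume "m \<in> ks (r * p)"
  then obtain a b where "m = a + b" "b \<in> ks p" using keys_mult[of r p] by auto
  then show "inI G m" using assms inI_add by auto
qed

lemma qp_mult: "qp G (r * qp G p) = qp G (r * p)"
proof -
  have "p = qp G p + (p - qp G p)" by simp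
  then have "r * p = r * qp G p + r * (p - qp G p)" by (metis distrib_left)
  moreover have "qp G (r * (p - qp G p)) = 0"
    by (rule qp_mult_zero) (auto simp: in_keys_iff lookup_minus lookup_qp split: if_splits)
  ultimately show ?thesis by (simp add: qp_add)
qed

lemma qp_id_iff: "qp G p = p \<longleftrightarrow> (\<forall>m\<in>ks p. \<not> inI G m)"
proof
  assume "qp G p = p"
  then show "\<forall>m\<in>ks p. \<not> inI G m" by (metis in_keys_iff lookup_qp)
next
  assume "\<forall>m\<in>ks p. \<not> inI G m"
  then show "qp G p = p" by (intro poly_mapping_eqI) (auto simp: lookup_qp in_keys_iff)
qed

lemma qp_single: "qp G (sg m c) = (if inI G m then 0 else sg m c)"
  by (rule poly_mapping_eqI) (auto simp: lookup_qp lookup_single when_def)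


lemma sum_fun_apply: "(\<Sum>i\<in>A. f i) x = (\<Sum>i\<in>A. f i x)"
  by (induction A rule: infinite_finite_induct) auto

lemma mdeg_add: "mdeg (a + b) = mdeg a + mdeg b"
  by (auto simp: mdeg_def fun_eq_iff lookup_add)

lemma mdeg_diff: "dv g m \<Longrightarrow> mdeg (m - g) + mdeg g = mdeg m"
  using mdeg_add[of "m - g" g] dv_diff'[of g m] by simp

definition cho :: "'x monom set \<Rightarrow> 'x monom \<Rightarrow> 'x monom" where
  "cho G m = (SOME g. g \<in> G \<and> dv g m)"

lemma cho_spec: "inI G m \<Longrightarrow> cho G m \<in> G \<and> dv (cho G m) m"
  unfolding cho_def inI_def by (rule someI_ex) blast

definition Phi :: "'x monom set \<Rightarrow> ('x monom \<Rightarrow> ('x, 'k::field) mpoly) \<Rightarrow> 'x monom \<Rightarrow> ('x, 'k) mpoly" where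
  "Phi G \<psi> m = qp G (sg (m - cho G m) 1 * \<psi> (cho G m))"

definition Ext :: "'x monom set \<Rightarrow> ('x monom \<Rightarrow> ('x, 'k::field) mpoly) \<Rightarrow> ('x, 'k) mpoly \<Rightarrow> ('x, 'k) mpoly" where
  "Ext G \<psi> p = (if p \<in> mideal G then (\<Sum>m\<in>ks p. sg 0 (lk p m) * Phi G \<psi> m) else 0)"

definition Comp :: "'x monom set \<Rightarrow> ('x monom \<Rightarrow> ('x, 'k::field) mpoly) \<Rightarrow> bool" where
  "Comp G \<psi> \<longleftrightarrow> (\<forall>g\<in>G. qp G (\<psi> g) = \<psi> g \<and> homogeneous (mdeg g) (\<psi> g)) \<and>
     (\<forall>g\<in>G. \<forall>h\<in>G. \<forall>m. dv g m \<longrightarrow> dv h m \<longrightarrow> qp G (sg (m - g) 1 * \<psi> g) = qp G (sg (m - h) 1 * \<psi> h))"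

lemma Comp_H3: "Comp G \<psi> \<Longrightarrow> g \<in> G \<Longrightarrow> h \<in> G \<Longrightarrow> dv g m \<Longrightarrow> dv h m \<Longrightarrow>
   qp G (sg (m - g) 1 * \<psi> g) = qp G (sg (m - h) 1 * \<psi> h)"
  unfolding Comp_def by blast

lemma Comp_H1: "Comp G \<psi> \<Longrightarrow> g \<in> G \<Longrightarrow> qp G (\<psi> g) = \<psi> g"
  unfolding Comp_def by blast

lemma Comp_H2: "Comp G \<psi> \<Longrightarrow> g \<in> G \<Longrightarrow> homogeneous (mdeg g) (\<psi> g)"
  unfolding Comp_def by blast

lemma Phi_any: "Comp G \<psi> \<Longrightarrow> g \<in> G \<Longrightarrow> dv g m \<Longrightarrow> Phi G \<psi> m = qp G (sg (m - g) 1 * \<psi> g)"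
proof -
  assume a: "Comp G \<psi>" "g \<in> G" "dv g m"
  then have "inI G m" unfolding inI_def by blast
  then have "cho G m \<in> G" "dv (cho G m) m" using cho_spec by auto
  then show ?thesis unfolding Phi_def using Comp_H3[OF a(1) _ a(2) _ a(3)] by blast
qed

lemma diff_add_dv: "dv g m \<Longrightarrow> t + m - g = t + (m - g)"
  unfolding dv_def by (metis add.left_commute add_diff_cancel_left')

lemma Phi_shift:
  assumes c: "Comp G \<psi>" and m: "inI G m"
  shows "Phi G \<psi> (t + m) = qp G (sg t 1 * Phi G \<psi> m)"
proof -
  obtain g where g: "g \<in> G" "dv g m" using m inI_def by blast
  have "Phi G \<psi> (t + m) = qp G (sg (t + m - g) 1 * \<psi> g)"
    using Phi_any[OF c g(1) dv_add_left[OF g(2)]] .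
  also have "\<dots> = qp G (sg t 1 * (sg (m - g) 1 * \<psi> g))"
    using diff_add_dv[OF g(2)] by (simp add: mult_single mult.assoc[symmetric])
  also have "\<dots> = qp G (sg t 1 * Phi G \<psi> m)"
    unfolding Phi_any[OF c g] qp_mult ..
  finally show ?thesis .
qed

lemma mideal_add: "p \<in> mideal G \<Longrightarrow> q \<in> mideal G \<Longrightarrow> (p + q :: ('x,'k::field) mpoly) \<in> mideal G"
  using keys_add[of p q] by (auto simp: mem_mideal)

lemma mideal_mult: "p \<in> mideal G \<Longrightarrow> (r * p :: ('x,'k::field) mpoly) \<in> mideal G"
  using keys_mult[of r p] inI_add by (fastforce simp: mem_mideal)

lemma mideal_zero: "(0 :: ('x,'k::field) mpoly) \<in> mideal G" by (simp add: mem_mideal)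

lemma mideal_sum: "(\<And>i. i \<in> A \<Longrightarrow> f i \<in> mideal G) \<Longrightarrow> (\<Sum>i\<in>A. f i :: ('x,'k::field) mpoly) \<in> mideal G"
  by (induction A rule: infinite_finite_induct) (auto intro: mideal_add mideal_zero)

lemma Ext_sum:
  assumes "p \<in> mideal G" "finite M" "ks p \<subseteq> M"
  shows "Ext G \<psi> p = (\<Sum>m\<in>M. sg 0 (lk p m) * Phi G \<psi> m)"
  unfolding Ext_def using assms by (auto intro!: sum.mono_neutral_left simp: in_keys_iff)

lemma Ext_add:
  assumes "p \<in> mideal G" "q \<in> mideal G"
  shows "Ext G \<psi> (p + q) = Ext G \<psi> p + Ext G \<psi> q"
proof -
  let ?M = "ks p \<union> ks q"
  have "Ext G \<psi> (p + q) = (\<Sum>m\<in>?M. sg 0 (lk (p + q) m) * Phi G \<psi> m)"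
    using Ext_sum[OF mideal_add[OF assms]] keys_add[of p q] by auto
  also have "\<dots> = (\<Sum>m\<in>?M. sg 0 (lk p m) * Phi G \<psi> m) + (\<Sum>m\<in>?M. sg 0 (lk q m) * Phi G \<psi> m)"
    by (simp add: lookup_add single_add distrib_right sum.distrib)
  also have "\<dots> = Ext G \<psi> p + Ext G \<psi> q"
    using Ext_sum[OF assms(1), of ?M] Ext_sum[OF assms(2), of ?M] by simp
  finally show ?thesis .
qed

lemma Ext_zero[simp]: "Ext G \<psi> 0 = 0"
  by (simp add: Ext_def)

lemma Ext_sumset:
  assumes "\<And>i. i \<in> A \<Longrightarrow> f i \<in> mideal G"
  shows "Ext G \<psi> (\<Sum>i\<in>A. f i) = (\<Sum>i\<in>A. Ext G \<psi> (f i))"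
  using assms
proof (induction A rule: infinite_finite_induct)
  case (insert x F)
  have "(\<Sum>i\<in>F. f i) \<in> mideal G"
    using insert by (intro mideal_sum) auto
  then show ?case using insert Ext_add[of "f x" G "\<Sum>i\<in>F. f i"] by auto
qed auto

lemma Ext_single_mult:
  assumes c: "Comp G \<psi>" and p: "p \<in> mideal G"
  shows "Ext G \<psi> (sg a c * p) = qp G (sg a c * Ext G \<psi> p)"
proof -
  have inI: "\<And>m. m \<in> ks p \<Longrightarrow> inI G m" using p mem_mideal by blast
  have ap: "sg a c * p \<in> mideal G" using mideal_mult[OF p] .
  have inj: "inj_on ((+) a) (ks p)" by (auto simp: inj_on_def)
  have "Ext G \<psi> (sg a c * p) = (\<Sum>M\<in>(+) a ` ks p. sg 0 (lk (sg a c * p) M) * Phi G \<psi> M)"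
    by (rule Ext_sum[OF ap]) (auto simp: keys_single_mult)
  also have "\<dots> = (\<Sum>m\<in>ks p. sg 0 (c * lk p m) * Phi G \<psi> (a + m))"
    by (simp add: sum.reindex[OF inj] lookup_single_mult)
  also have "\<dots> = (\<Sum>m\<in>ks p. qp G (sg a c * (sg 0 (lk p m) * Phi G \<psi> m)))"
  proof (intro sum.cong refl)
    fix m assume "m \<in> ks p"
    then have "Phi G \<psi> (a + m) = qp G (sg a 1 * Phi G \<psi> m)" using Phi_shift[OF c] inI by blast
    moreover have "sg a c * (sg 0 (lk p m) * Phi G \<psi> m) = sg 0 (c * lk p m) * (sg a 1 * Phi G \<psi> m)"
      by (simp add: mult.assoc[symmetric] mult_single)
    ultimately show "sg 0 (c * lk p m) * Phi G \<psi> (a + m) = qp G (sg a c * (sg 0 (lk p m) * Phi G \<psi> m))"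
      by (simp add: qp_smult)
  qed
  also have "\<dots> = qp G (sg a c * Ext G \<psi> p)"
    using p by (simp add: Ext_def qp_sum sum_distrib_left)
  finally show ?thesis .
qed

lemma Ext_mult:
  assumes c: "Comp G \<psi>" and p: "p \<in> mideal G"
  shows "Ext G \<psi> (r * p) = qp G (r * Ext G \<psi> p)"
proof -
  have "r * p = (\<Sum>a\<in>ks r. sg a (lk r a)) * p"
    using poly_sum_single[of r] by simp
  then have "r * p = (\<Sum>a\<in>ks r. sg a (lk r a) * p)"
    by (simp add: sum_distrib_right)
  then have "Ext G \<psi> (r * p) = (\<Sum>a\<in>ks r. Ext G \<psi> (sg a (lk r a) * p))"
    using Ext_sumset[of "ks r" "\<lambda>a. sg a (lk r a) * p"] mideal_mult[OF p] by simp
  also have "\<dots> = (\<Sum>a\<in>ks r. qp G (sg a (lk r a) * Ext G \<psi> p))"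
    using Ext_single_mult[OF c p] by simp
  also have "\<dots> = qp G ((\<Sum>a\<in>ks r. sg a (lk r a)) * Ext G \<psi> p)"
    by (simp add: qp_sum sum_distrib_right)
  also have "\<dots> = qp G (r * Ext G \<psi> p)"
    using poly_sum_single[of r] by simp
  finally show ?thesis .
qed

lemma keys_Phi: "M \<in> ks (Phi G \<psi> m) \<Longrightarrow> \<not> inI G M"
  unfolding Phi_def by (auto simp: in_keys_iff lookup_qp)

lemma keys_Ext: "M \<in> ks (Ext G \<psi> p) \<Longrightarrow> \<exists>m\<in>ks p. M \<in> ks (Phi G \<psi> m)"
proof -
  assume M: "M \<in> ks (Ext G \<psi> p)"
  then have "p \<in> mideal G" by (auto simp: Ext_def split: if_splits)
  then have "M \<in> ks (\<Sum>m\<in>ks p. sg 0 (lk p m) * Phi G \<psi> m)" using M by (simp add: Ext_def)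
  then obtain m where m: "m \<in> ks p" "M \<in> ks (sg 0 (lk p m) * Phi G \<psi> m)"
    using keys_sum[of "\<lambda>m. sg 0 (lk p m) * Phi G \<psi> m" "ks p"] by blast
  have "M \<in> ks (Phi G \<psi> m)" using m(2) keys_single_mult[of 0 "lk p m" "Phi G \<psi> m"] by auto
  then show ?thesis using m(1) by blast
qed

lemma Ext_homog:
  assumes c: "Comp G \<psi>" and p: "p \<in> mideal G" and h: "homogeneous u p"
  shows "homogeneous u (Ext G \<psi> p)"
  unfolding homogeneous_def
proof
  fix M assume "M \<in> ks (Ext G \<psi> p)"
  then obtain m where m: "m \<in> ks p" "M \<in> ks (Phi G \<psi> m)" using keys_Ext by blast
  have mu: "mdeg m = u" using h m(1) by (simp add: homogeneous_def)
  have "inI G m" using p m(1) mem_mideal by blast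
  then have g: "cho G m \<in> G" "dv (cho G m) m" using cho_spec by auto
  have "M \<in> ks (sg (m - cho G m) 1 * \<psi> (cho G m))"
    using m(2) unfolding Phi_def by (auto simp: in_keys_iff lookup_qp split: if_splits)
  then obtain b where b: "M = (m - cho G m) + b" "b \<in> ks (\<psi> (cho G m))"
    using keys_single_mult by blast
  have "mdeg b = mdeg (cho G m)" using Comp_H2[OF c g(1)] b(2) by (simp add: homogeneous_def)
  then show "mdeg M = u" using b(1) mdeg_add[of "m - cho G m" b] mdeg_diff[OF g(2)] mu by simp
qed

lemma Ext_tangent:
  assumes c: "Comp G \<psi>"
  shows "Ext G \<psi> \<in> tangent_hom (mideal G :: ('x, 'k::field) mpoly set)"
  unfolding tangent_hom_def
proof (intro CollectI conjI allI ballI impI)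
  fix p :: "('x,'k) mpoly" assume "p \<notin> mideal G" then show "Ext G \<psi> p = 0" by (simp add: Ext_def)
next
  fix p :: "('x,'k) mpoly" assume "p \<in> mideal G"
  show "qp G (Ext G \<psi> p) = Ext G \<psi> p"
    unfolding qp_id_iff using keys_Ext keys_Phi by blast
next
  fix p q :: "('x,'k) mpoly" assume "p \<in> mideal G" "q \<in> mideal G"
  then show "Ext G \<psi> (p + q) = Ext G \<psi> p + Ext G \<psi> q" by (rule Ext_add)
next
  fix r p :: "('x,'k) mpoly" assume "p \<in> mideal G"
  then show "Ext G \<psi> (r * p) = qp G (r * Ext G \<psi> p)" using Ext_mult[OF c] by blast
next
  fix u p assume "p \<in> mideal G" "homogeneous u (p :: ('x,'k) mpoly)"
  then show "homogeneous u (Ext G \<psi> p)" using Ext_homog[OF c] by blast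
qed


lemma homogeneous_single: "homogeneous (mdeg g) (sg g (1::'k::field))"
  by (simp add: homogeneous_def)

lemma tangent_Ext:
  assumes phi: "\<phi> \<in> tangent_hom (mideal G :: ('x, 'k::field) mpoly set)"
  shows "Comp G (\<lambda>g. \<phi> (sg g 1)) \<and> Ext G (\<lambda>g. \<phi> (sg g 1)) = \<phi>"
proof -
  let ?I = "mideal G :: ('x, 'k) mpoly set"
  let ?\<psi> = "\<lambda>g. \<phi> (sg g 1)"
  have T1: "\<And>p. p \<notin> ?I \<Longrightarrow> \<phi> p = 0" using phi unfolding tangent_hom_def by blast
  have T2: "\<And>p. p \<in> ?I \<Longrightarrow> qp G (\<phi> p) = \<phi> p" using phi unfolding tangent_hom_def by blast
  have T3: "\<And>p q. p \<in> ?I \<Longrightarrow> q \<in> ?I \<Longrightarrow> \<phi> (p + q) = \<phi> p + \<phi> q" using phi unfolding tangent_hom_def by blast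
  have T4: "\<And>r p. p \<in> ?I \<Longrightarrow> \<phi> (r * p) = qp G (r * \<phi> p)" using phi unfolding tangent_hom_def by blast
  have T5: "\<And>u p. p \<in> ?I \<Longrightarrow> homogeneous u p \<Longrightarrow> homogeneous u (\<phi> p)" using phi unfolding tangent_hom_def by blast
  have z0: "(0::('x,'k) mpoly) \<in> ?I" by (rule mideal_zero)
  have z: "\<phi> 0 = 0" using T4[OF z0, of 0] by simp
  have gI: "\<And>m. inI G m \<Longrightarrow> sg m c \<in> ?I" for c by (simp add: mem_mideal)
  have sm: "\<phi> (sg m c) = qp G (sg (m - g) c * ?\<psi> g)" if "g \<in> G" "dv g m" for m g c
  proof -
    have "sg m c = sg (m - g) c * sg g (1::'k)" using dv_diff'[OF that(2)] by (simp add: mult_single)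
    moreover have "sg g (1::'k) \<in> ?I" using that(1) gI[of g] dv_refl inI_def by blast
    ultimately show ?thesis using T4 by simp
  qed
  have C: "Comp G ?\<psi>"
    unfolding Comp_def
  proof (intro conjI ballI allI impI)
    fix g assume g: "g \<in> G"
    then have "sg g (1::'k) \<in> ?I" using gI[of g] dv_refl inI_def by blast
    then show "qp G (?\<psi> g) = ?\<psi> g" "homogeneous (mdeg g) (?\<psi> g)" using T2 T5 homogeneous_single by auto
  next
    fix g h m assume "g \<in> G" "h \<in> G" "dv g m" "dv h m"
    then show "qp G (sg (m - g) 1 * ?\<psi> g) = qp G (sg (m - h) 1 * ?\<psi> h)"
      using sm[of g m 1] sm[of h m 1] by simp
  qed
  have sumI: "\<phi> (\<Sum>i\<in>A. f i) = (\<Sum>i\<in>A. \<phi> (f i))" if "\<And>i. i \<in> A \<Longrightarrow> f i \<in> ?I" for A f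
    using that
  proof (induction A rule: infinite_finite_induct)
    case (insert x F)
    have "(\<Sum>i\<in>F. f i) \<in> ?I" using insert by (intro mideal_sum) auto
    then show ?case using insert T3[of "f x" "\<Sum>i\<in>F. f i"] by auto
  qed (auto simp: z)
  have "Ext G ?\<psi> p = \<phi> p" for p
  proof (cases "p \<in> ?I")
    case False then show ?thesis using T1 by (simp add: Ext_def)
  next
    case True
    have ki: "\<And>m. m \<in> ks p \<Longrightarrow> inI G m" using True mem_mideal by blast
    have "\<phi> p = \<phi> (\<Sum>m\<in>ks p. sg m (lk p m))" using poly_sum_single[of p] by simp
    also have "\<dots> = (\<Sum>m\<in>ks p. \<phi> (sg m (lk p m)))" by (rule sumI) (simp add: gI ki)
    also have "\<dots> = (\<Sum>m\<in>ks p. sg 0 (lk p m) * Phi G ?\<psi> m)"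
    proof (intro sum.cong refl)
      fix m assume "m \<in> ks p"
      then have c: "cho G m \<in> G" "dv (cho G m) m" using cho_spec ki by auto
      have "\<phi> (sg m (lk p m)) = qp G (sg (m - cho G m) (lk p m) * ?\<psi> (cho G m))" using sm[OF c] .
      also have "\<dots> = qp G (sg 0 (lk p m) * (sg (m - cho G m) 1 * ?\<psi> (cho G m)))"
        by (simp add: mult.assoc[symmetric] mult_single)
      finally show "\<phi> (sg m (lk p m)) = sg 0 (lk p m) * Phi G ?\<psi> m"
        by (simp add: qp_smult Phi_def)
    qed
    finally show ?thesis using True by (simp add: Ext_def)
  qed
  then show ?thesis using C by auto
qed

lemma Ext_gen:
  fixes \<psi> :: "'x monom \<Rightarrow> ('x, 'k::field) mpoly"
  assumes "Comp G \<psi>" "g \<in> G"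
  shows "Ext G \<psi> (sg g 1) = \<psi> g"
proof -
  have "inI G g" unfolding inI_def using assms(2) dv_refl by blast
  then have i: "sg g (1::'k) \<in> mideal G" by (simp add: mem_mideal)
  have "Ext G \<psi> (sg g 1) = Phi G \<psi> g" using i by (simp add: Ext_def)
  also have "\<dots> = qp G (sg (g - g) 1 * \<psi> g)" using Phi_any[OF assms dv_refl] .
  also have "\<dots> = \<psi> g" using Comp_H1[OF assms] by simp
  finally show ?thesis .
qed

lemma Ext_cong:
  assumes "\<And>g. g \<in> G \<Longrightarrow> \<psi> g = \<psi>' g"
  shows "Ext G \<psi> = Ext G \<psi>'"
proof
  fix p
  show "Ext G \<psi> p = Ext G \<psi>' p"
  proof (cases "p \<in> mideal G")
    case True
    have "Phi G \<psi> m = Phi G \<psi>' m" if "m \<in> ks p" for m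
    proof -
      have "inI G m" using that True mem_mideal by blast
      then have "cho G m \<in> G" using cho_spec by blast
      then show ?thesis using assms unfolding Phi_def by simp
    qed
    then show ?thesis using True unfolding Ext_def by (simp cong: sum.cong)
  qed (simp add: Ext_def)
qed

lemma Phi_lin:
  "Phi G (\<lambda>g. \<Sum>d\<in>F. sg 0 (a d) * \<psi> d g) m = (\<Sum>d\<in>F. sg 0 (a d) * Phi G (\<psi> d) m)"
  unfolding Phi_def by (simp add: sum_distrib_left qp_sum mult.left_commute qp_smult)

lemma Ext_lin:
  "Ext G (\<lambda>g. \<Sum>d\<in>F. sg 0 (a d) * \<psi> d g) p = (\<Sum>d\<in>F. sg 0 (a d) * Ext G (\<psi> d) p)"
proof (cases "p \<in> mideal G")
  case True
  then show ?thesis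
    by (simp add: Ext_def Phi_lin sum_distrib_left mult.left_commute sum.swap[of _ F])
qed (simp add: Ext_def)

lemma vs_fun: "vector_space (\<lambda>(c::'k::field) (\<phi> :: ('x,'k) mpoly \<Rightarrow> ('x,'k) mpoly) p. smult_mp c (\<phi> p))"
  by unfold_locales (auto simp: fun_eq_iff poly_mapping_eq_iff lookup_add algebra_simps)


fun opv :: "'e var \<Rightarrow> 'e var" where
  "opv (X e) = Y e" | "opv (Y e) = X e"

fun ed :: "'e var \<Rightarrow> 'e" where
  "ed (X e) = e" | "ed (Y e) = e"

lemma opv_ne[simp]: "opv x \<noteq> x" by (cases x) auto
lemma opv_ne'[simp]: "x \<noteq> opv x" by (cases x) auto
lemma ed_opv[simp]: "ed (opv x) = ed x" by (cases x) auto
lemma opv_opv[simp]: "opv (opv x) = x" by (cases x) auto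
lemma var_cases: "ed x = ed y \<Longrightarrow> x = y \<or> x = opv y" by (cases x; cases y) auto
lemma opv_inj[simp]: "opv x = opv y \<longleftrightarrow> x = y" by (cases x; cases y) auto

definition mv :: "'e var \<Rightarrow> 'e monom" where "mv x = sg x 1"

lemma lk_mv: "lk (mv x) y = (if x = y then 1 else 0)"
  by (simp add: mv_def lookup_single)

lemma mdeg_mv: "mdeg (mv x) = (\<lambda>e. if ed x = e then 1 else 0)"
  by (cases x) (auto simp: mdeg_def lk_mv fun_eq_iff)

lemma mv_pair_eq:
  assumes "ed x \<noteq> ed y" "mv x + mv y = mv x' + mv y'"
  shows "(x = x' \<and> y = y') \<or> (x = y' \<and> y = x')"
proof -
  have xy: "x \<noteq> y" using assms(1) by auto
  have l: "\<And>z. lk (mv x + mv y) z = lk (mv x' + mv y') z" using assms(2) by simp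
  have "x = x' \<or> x = y'" using l[of x] xy by (auto simp: lookup_add lk_mv split: if_splits)
  moreover have "y = x' \<or> y = y'" using l[of y] xy by (auto simp: lookup_add lk_mv split: if_splits)
  ultimately show ?thesis using xy by auto
qed

context tree
begin

definition Z :: "'e \<Rightarrow> 'e \<Rightarrow> 'e var" where "Z i j = zvar tail head i j"
definition W :: "'e \<Rightarrow> 'e \<Rightarrow> 'e var" where "W i j = opv (Z i j)"

lemma Z_S: "Z i j = (if S i j then X j else Y j)"
  by (simp add: Z_def zvar_def S_def)

lemma ed_Z[simp]: "ed (Z i j) = j" by (simp add: Z_S)
lemma ed_W[simp]: "ed (W i j) = j" by (simp add: W_def)
lemma Z_eq: "Z a b = Z c b \<longleftrightarrow> S a b = S c b" by (simp add: Z_S)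
lemma ZW_eq[simp]: "Z a b = W c b \<longleftrightarrow> Z a b \<noteq> Z c b" by (simp add: W_def Z_S)
lemma WZ_eq[simp]: "W c b = Z a b \<longleftrightarrow> Z a b \<noteq> Z c b" by (auto simp: W_def Z_S)
lemma WW_eq[simp]: "W a b = W c b \<longleftrightarrow> Z a b = Z c b" by (simp add: W_def)
lemma Z_ne_edge: "b \<noteq> d \<Longrightarrow> Z a b \<noteq> Z c d" using ed_Z by metis
lemma W_ne_edge: "b \<noteq> d \<Longrightarrow> W a b \<noteq> Z c d" using ed_Z ed_W by metis
lemma W_ne_edge': "b \<noteq> d \<Longrightarrow> W a b \<noteq> W c d" using ed_W by metis
lemma var_ZW: "ed x = b \<Longrightarrow> x = Z a b \<or> x = W a b"
  using var_cases[of x "Z a b"] by (auto simp: W_def)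

definition Gm :: "'e \<Rightarrow> 'e \<Rightarrow> 'e monom" where "Gm i j = mv (Z i j) + mv (Z j i)"
definition Am :: "'e \<Rightarrow> 'e \<Rightarrow> 'e monom" where "Am i j = mv (W j i) + mv (Z i j)"
definition Cm :: "'e \<Rightarrow> 'e \<Rightarrow> 'e monom" where "Cm i j = mv (W j i) + mv (W i j)"

definition GT :: "'e monom set" where "GT = {Gm i j | i j. i \<noteq> j}"

lemma Gm_sym: "Gm i j = Gm j i" by (simp add: Gm_def add.commute)
lemma Cm_sym: "Cm i j = Cm j i" by (simp add: Cm_def add.commute)

lemma pvar_mult: "pvar x * pvar y = (sg (mv x + mv y) 1 :: ('e, 'k::field) mpoly)"
  by (simp add: pvar_def mv_def mult_single)

lemma I_T_eq: "I_T tail head = (mideal GT :: ('e, 'k::field) mpoly set)"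
proof -
  have "{pvar (zvar tail head i j) * pvar (zvar tail head j i) | i j. i \<noteq> j}
      = {sg (Gm i j) (1::'k) | i j. i \<noteq> j}"
    by (simp add: pvar_mult Gm_def Z_def)
  also have "\<dots> = (\<lambda>g. sg g (1::'k)) ` GT"
    unfolding GT_def by blast
  finally show ?thesis by (simp add: I_T_def mideal_def)
qed

lemma dv_pair:
  assumes "x \<noteq> y"
  shows "dv (mv x + mv y) M \<longleftrightarrow> lk M x \<ge> 1 \<and> lk M y \<ge> 1"
proof
  assume "dv (mv x + mv y) M"
  then have "lk (mv x + mv y) x \<le> lk M x" "lk (mv x + mv y) y \<le> lk M y"
    unfolding dv_lookup by blast+
  then show "lk M x \<ge> 1 \<and> lk M y \<ge> 1"
    using assms by (simp add: lookup_add lk_mv)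
next
  assume h: "lk M x \<ge> 1 \<and> lk M y \<ge> 1"
  show "dv (mv x + mv y) M" unfolding dv_lookup
    using h assms by (auto simp: lookup_add lk_mv)
qed

lemma inI_GT: "inI GT M \<longleftrightarrow> (\<exists>a b. a \<noteq> b \<and> lk M (Z a b) \<ge> 1 \<and> lk M (Z b a) \<ge> 1)"
proof
  assume "inI GT M"
  then obtain a b where ab: "a \<noteq> b" "dv (Gm a b) M" unfolding inI_def GT_def by blast
  have "Z a b \<noteq> Z b a" using Z_ne_edge ab(1) by metis
  then show "\<exists>a b. a \<noteq> b \<and> lk M (Z a b) \<ge> 1 \<and> lk M (Z b a) \<ge> 1"
    using ab dv_pair unfolding Gm_def by blast
next
  assume "\<exists>a b. a \<noteq> b \<and> lk M (Z a b) \<ge> 1 \<and> lk M (Z b a) \<ge> 1"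
  then obtain a b where ab: "a \<noteq> b" "lk M (Z a b) \<ge> 1" "lk M (Z b a) \<ge> 1" by blast
  have "Z a b \<noteq> Z b a" using Z_ne_edge ab(1) by metis
  then have "dv (Gm a b) M" using ab dv_pair unfolding Gm_def by blast
  then show "inI GT M" unfolding inI_def GT_def using ab(1) by blast
qed

lemma inI3:
  assumes "ed u \<noteq> ed v" "ed u \<noteq> ed w" "ed v \<noteq> ed w"
  shows "inI GT (mv u + mv v + mv w) \<longleftrightarrow>
    (Z (ed v) (ed u) = u \<and> Z (ed u) (ed v) = v) \<or> (Z (ed w) (ed u) = u \<and> Z (ed u) (ed w) = w)
    \<or> (Z (ed w) (ed v) = v \<and> Z (ed v) (ed w) = w)"
proof -
  have l: "lk (mv u + mv v + mv w) x \<ge> 1 \<longleftrightarrow> x = u \<or> x = v \<or> x = w" for x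
    by (auto simp: lookup_add lk_mv)
  show ?thesis unfolding inI_GT l
  proof
    assume "\<exists>a b. a \<noteq> b \<and> (Z a b = u \<or> Z a b = v \<or> Z a b = w) \<and> (Z b a = u \<or> Z b a = v \<or> Z b a = w)"
    then obtain a b where ab: "a \<noteq> b" "Z a b = u \<or> Z a b = v \<or> Z a b = w" "Z b a = u \<or> Z b a = v \<or> Z b a = w"
      by blast
    have eb: "(Z a b = u \<and> b = ed u) \<or> (Z a b = v \<and> b = ed v) \<or> (Z a b = w \<and> b = ed w)"
      using ab(2) ed_Z by metis
    have ea: "(Z b a = u \<and> a = ed u) \<or> (Z b a = v \<and> a = ed v) \<or> (Z b a = w \<and> a = ed w)"
      using ab(3) ed_Z by metis
    show "(Z (ed v) (ed u) = u \<and> Z (ed u) (ed v) = v) \<or> (Z (ed w) (ed u) = u \<and> Z (ed u) (ed w) = w)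
    \<or> (Z (ed w) (ed v) = v \<and> Z (ed v) (ed w) = w)"
      using ea eb ab(1) assms by (elim disjE conjE; simp)
  next
    assume "(Z (ed v) (ed u) = u \<and> Z (ed u) (ed v) = v) \<or> (Z (ed w) (ed u) = u \<and> Z (ed u) (ed w) = w)
    \<or> (Z (ed w) (ed v) = v \<and> Z (ed v) (ed w) = w)"
    then show "\<exists>a b. a \<noteq> b \<and> (Z a b = u \<or> Z a b = v \<or> Z a b = w) \<and> (Z b a = u \<or> Z b a = v \<or> Z b a = w)"
    proof (elim disjE conjE)
      assume "Z (ed v) (ed u) = u" "Z (ed u) (ed v) = v"
      then show ?thesis using assms by (intro exI[of _ "ed v"] exI[of _ "ed u"]) simp
    next
      assume "Z (ed w) (ed u) = u" "Z (ed u) (ed w) = w"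
      then show ?thesis using assms by (intro exI[of _ "ed w"] exI[of _ "ed u"]) simp
    next
      assume "Z (ed w) (ed v) = v" "Z (ed v) (ed w) = w"
      then show ?thesis using assms by (intro exI[of _ "ed w"] exI[of _ "ed v"]) simp
    qed
  qed
qed

lemma inI2:
  assumes "ed u \<noteq> ed v"
  shows "inI GT (mv u + mv v) \<longleftrightarrow> (Z (ed v) (ed u) = u \<and> Z (ed u) (ed v) = v)"
proof -
  have l: "lk (mv u + mv v) x \<ge> 1 \<longleftrightarrow> x = u \<or> x = v" for x
    by (auto simp: lookup_add lk_mv)
  show ?thesis unfolding inI_GT l
  proof
    assume "\<exists>a b. a \<noteq> b \<and> (Z a b = u \<or> Z a b = v) \<and> (Z b a = u \<or> Z b a = v)"
    then obtain a b where ab: "a \<noteq> b" "Z a b = u \<or> Z a b = v" "Z b a = u \<or> Z b a = v"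
      by blast
    have eb: "(Z a b = u \<and> b = ed u) \<or> (Z a b = v \<and> b = ed v)"
      using ab(2) ed_Z by metis
    have ea: "(Z b a = u \<and> a = ed u) \<or> (Z b a = v \<and> a = ed v)"
      using ab(3) ed_Z by metis
    show "Z (ed v) (ed u) = u \<and> Z (ed u) (ed v) = v"
      using ea eb ab(1) assms by (elim disjE conjE; simp)
  next
    assume "Z (ed v) (ed u) = u \<and> Z (ed u) (ed v) = v"
    then show "\<exists>a b. a \<noteq> b \<and> (Z a b = u \<or> Z a b = v) \<and> (Z b a = u \<or> Z b a = v)"
      using assms by (intro exI[of _ "ed v"] exI[of _ "ed u"]) simp
  qed
qed

lemma inI_Gm: "i \<noteq> j \<Longrightarrow> inI GT (Gm i j)"
  using inI2[of "Z j i" "Z i j"] by (simp add: Gm_def add.commute)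
lemma notinI_Am: "i \<noteq> j \<Longrightarrow> \<not> inI GT (Am i j)"
  using inI2[of "W j i" "Z i j"] by (simp add: Am_def)
lemma notinI_Cm: "i \<noteq> j \<Longrightarrow> \<not> inI GT (Cm i j)"
  using inI2[of "W j i" "W i j"] by (simp add: Cm_def)

end

context tree
begin

lemma mdeg_Gm: "mdeg (Gm i j) = (\<lambda>e. (if i = e then 1 else 0) + (if j = e then 1 else 0))"
  by (auto simp: Gm_def mdeg_add mdeg_mv fun_eq_iff)
lemma mdeg_Am: "mdeg (Am i j) = mdeg (Gm i j)"
  by (auto simp: Am_def Gm_def mdeg_add mdeg_mv fun_eq_iff)
lemma mdeg_Am': "mdeg (Am j i) = mdeg (Gm i j)"
  by (auto simp: Am_def Gm_def mdeg_add mdeg_mv fun_eq_iff)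
lemma mdeg_Cm: "mdeg (Cm i j) = mdeg (Gm i j)"
  by (auto simp: Cm_def Gm_def mdeg_add mdeg_mv fun_eq_iff)

lemma lk_ZW: "lk M (Z a b) + lk M (W a b) = mdeg M b"
  by (simp add: Z_S W_def mdeg_def)

lemma lk_ZW_cases: "ed z = b \<Longrightarrow> lk M z = lk M (Z a b) \<or> lk M z = lk M (W a b)"
  using var_ZW by metis

lemma shape:
  assumes ij: "i \<noteq> j" and md: "mdeg M = mdeg (Gm i j)"
  shows "M = Gm i j \<or> M = Am i j \<or> M = Am j i \<or> M = Cm i j"
proof -
  have mde: "mdeg M e = (if i = e then 1 else 0) + (if j = e then 1 else 0)" for e
    using md mdeg_Gm by metis
  have si: "lk M (Z j i) + lk M (W j i) = 1" using lk_ZW[of M j i] mde[of i] ij by simp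
  have sj: "lk M (Z i j) + lk M (W i j) = 1" using lk_ZW[of M i j] mde[of j] ij by simp
  define x where "x = (if lk M (Z j i) \<ge> 1 then Z j i else W j i)"
  define y where "y = (if lk M (Z i j) \<ge> 1 then Z i j else W i j)"
  have xv: "lk M x = 1" "lk M (opv x) = 0" "ed x = i" using si by (auto simp: x_def W_def)
  have yv: "lk M y = 1" "lk M (opv y) = 0" "ed y = j" using sj by (auto simp: y_def W_def)
  have "M = mv x + mv y"
  proof (rule poly_mapping_eqI)
    fix z
    show "lk M z = lk (mv x + mv y) z"
    proof (cases "ed z = i")
      case True
      then have "z = x \<or> z = opv x" using var_cases xv(3) by metis
      then show ?thesis using xv yv ij True by (auto simp: lookup_add lk_mv)
    next
      case False
      show ?thesis
      proof (cases "ed z = j")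
        case True
        then have "z = y \<or> z = opv y" using var_cases yv(3) by metis
        then show ?thesis using xv yv ij True by (auto simp: lookup_add lk_mv)
      next
        case False2: False
        have "mdeg M (ed z) = 0" using mde[of "ed z"] False False2 by auto
        then have "lk M z = 0" using lk_ZW[of M "ed z" "ed z"] lk_ZW_cases[of z "ed z" M "ed z"] by simp
        moreover have "z \<noteq> x" "z \<noteq> y" using False False2 xv yv by auto
        ultimately show ?thesis by (simp add: lookup_add lk_mv)
      qed
    qed
  qed
  moreover have "x = Z j i \<or> x = W j i" "y = Z i j \<or> y = W i j" by (auto simp: x_def y_def)
  ultimately show ?thesis unfolding Gm_def Am_def Cm_def by (auto simp: add.commute)
qed

definition Psi :: "('e \<Rightarrow> 'e \<Rightarrow> 'k::field) \<Rightarrow> ('e \<Rightarrow> 'e \<Rightarrow> 'k) \<Rightarrow> 'e monom \<Rightarrow> ('e, 'k) mpoly" where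
  "Psi c \<gamma> g = (\<Sum>(i,j)\<in>{(i,j). i \<noteq> j \<and> Gm i j = g}. sg (Am i j) (c i j) + sg (Cm i j) (\<gamma> i j))"

lemma Gm_eq:
  assumes "i \<noteq> j"
  shows "{(a,b). a \<noteq> b \<and> Gm a b = Gm i j} = {(i,j),(j,i)}"
proof (intro set_eqI iffI)
  fix p assume "p \<in> {(a,b). a \<noteq> b \<and> Gm a b = Gm i j}"
  then obtain a b where p: "p = (a,b)" "a \<noteq> b" "Gm a b = Gm i j" by blast
  have "ed (Z a b) \<noteq> ed (Z b a)" using p(2) by simp
  then have "(Z a b = Z i j \<and> Z b a = Z j i) \<or> (Z a b = Z j i \<and> Z b a = Z i j)"
    using mv_pair_eq p(3) unfolding Gm_def by blast
  then have "(b = j \<and> a = i) \<or> (b = i \<and> a = j)" using ed_Z by metis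
  then show "p \<in> {(i,j),(j,i)}" using p by auto
next
  fix p assume "p \<in> {(i,j),(j,i)}"
  then show "p \<in> {(a,b). a \<noteq> b \<and> Gm a b = Gm i j}" using assms Gm_sym by auto
qed

lemma Psi_G:
  assumes "i \<noteq> j"
  shows "Psi c \<gamma> (Gm i j) = sg (Am i j) (c i j) + sg (Cm i j) (\<gamma> i j) + (sg (Am j i) (c j i) + sg (Cm j i) (\<gamma> j i))"
  unfolding Psi_def Gm_eq[OF assms] using assms by simp

lemma lk_Psi_G:
  assumes "i \<noteq> j"
  shows "lk (Psi c \<gamma> (Gm i j)) M = (if M = Am i j then c i j else 0) + (if M = Am j i then c j i else 0)
     + (if M = Cm i j then \<gamma> i j + \<gamma> j i else 0)"
  unfolding Psi_G[OF assms] using Cm_sym[of j i] by (simp add: lookup_add lookup_single when_def)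

lemma Psi_notG: "g \<notin> GT \<Longrightarrow> Psi c \<gamma> g = 0"
proof -
  assume "g \<notin> GT"
  then have e: "{(i,j). i \<noteq> j \<and> Gm i j = g} = {}" unfolding GT_def by blast
  show ?thesis unfolding Psi_def e by simp
qed

lemma Psi_H1:
  assumes "g \<in> GT"
  shows "qp GT (Psi c \<gamma> g) = Psi c \<gamma> g"
proof -
  obtain i j where g: "i \<noteq> j" "g = Gm i j" using assms GT_def by blast
  show ?thesis
  proof (rule poly_mapping_eqI)
    fix M
    show "lk (qp GT (Psi c \<gamma> g)) M = lk (Psi c \<gamma> g) M"
      using notinI_Am[of i j] notinI_Am[of j i] notinI_Cm[of i j] g
      by (auto simp: lookup_qp lk_Psi_G)
  qed
qed

lemma Psi_H2:
  assumes "g \<in> GT"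
  shows "homogeneous (mdeg g) (Psi c \<gamma> g)"
proof -
  obtain i j where g: "i \<noteq> j" "g = Gm i j" using assms GT_def by blast
  show ?thesis unfolding homogeneous_def
  proof
    fix M assume "M \<in> ks (Psi c \<gamma> g)"
    then have "lk (Psi c \<gamma> g) M \<noteq> 0" by (simp add: in_keys_iff)
    then have "M = Am i j \<or> M = Am j i \<or> M = Cm i j" using g lk_Psi_G[OF g(1), of c \<gamma> M] by (auto split: if_splits)
    then show "mdeg M = mdeg g" using g mdeg_Am mdeg_Am' mdeg_Cm by auto
  qed
qed

end

context tree
begin

lemma Z_ne_sw: "a \<noteq> b \<Longrightarrow> Z a b \<noteq> Z b a" using Z_ne_edge by metis

lemma lk_Gm: "lk (Gm a b) z = (if Z a b = z then 1 else 0) + (if Z b a = z then 1 else 0)"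
  by (simp add: Gm_def lookup_add lk_mv)

lemma dv_Gm: "a \<noteq> b \<Longrightarrow> dv (Gm a b) m \<longleftrightarrow> lk m (Z a b) \<ge> 1 \<and> lk m (Z b a) \<ge> 1"
  unfolding Gm_def using dv_pair Z_ne_sw by blast

lemma Gm_in: "a \<noteq> b \<Longrightarrow> Gm a b \<in> GT" unfolding GT_def by blast

lemma qp_dv_zero:
  assumes "h \<in> GT" "dv h r"
  shows "qp GT (sg r c * P) = 0"
proof (rule qp_zero_if)
  fix M assume "M \<in> ks (sg r c * P)"
  then obtain b where "M = r + b" using keys_single_mult by blast
  then have "dv h M" using assms(2) dv_add_left[of h r b] by (simp add: add.commute)
  then show "inI GT M" using assms(1) inI_def by blast
qed

lemma H3_share:
  assumes LCM: "\<forall>i j k. i \<noteq> j \<longrightarrow> i \<noteq> k \<longrightarrow> j \<noteq> k \<longrightarrow> Z j i = Z k i \<longrightarrow>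
      qp GT (sg (mv (Z i k)) 1 * \<psi> (Gm i j)) = qp GT (sg (mv (Z i j)) 1 * \<psi> (Gm i k))"
  and d: "i \<noteq> j" "i \<noteq> k" "j \<noteq> k" and m: "dv (Gm i j) m" "dv (Gm i k) m"
  shows "qp GT (sg (m - Gm i j) 1 * \<psi> (Gm i j)) = qp GT (sg (m - Gm i k) 1 * \<psi> (Gm i k))"
proof -
  have l: "lk m (Z i j) \<ge> 1" "lk m (Z j i) \<ge> 1" "lk m (Z i k) \<ge> 1" "lk m (Z k i) \<ge> 1"
    using m dv_Gm d by auto
  have ne: "Z i k \<noteq> Z i j" "Z i k \<noteq> Z j i" "Z k i \<noteq> Z i j" "Z i j \<noteq> Z i k" "Z i j \<noteq> Z k i" "Z j i \<noteq> Z i k"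
    using d Z_ne_edge by metis+
  show ?thesis
  proof (cases "Z j i = Z k i")
    case False
    have "dv (Gm i k) (m - Gm i j)"
      using dv_Gm[of i k] d l ne False by (auto simp: lookup_minus_nat lk_Gm)
    then have 1: "qp GT (sg (m - Gm i j) 1 * \<psi> (Gm i j)) = 0" using qp_dv_zero Gm_in d by blast
    have "dv (Gm i j) (m - Gm i k)"
      using dv_Gm[of i j] d l ne False by (auto simp: lookup_minus_nat lk_Gm)
    then have 2: "qp GT (sg (m - Gm i k) 1 * \<psi> (Gm i k)) = 0" using qp_dv_zero Gm_in d by blast
    show ?thesis using 1 2 by simp
  next
    case True
    define L where "L = mv (Z j i) + mv (Z i j) + mv (Z i k)"
    have "dv L m" unfolding dv_lookup
    proof
      fix z
      show "lk L z \<le> lk m z" using l ne True by (auto simp: L_def lookup_add lk_mv)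
    qed
    then obtain t where t: "m = L + t" unfolding dv_def by blast
    have e1: "m - Gm i j = mv (Z i k) + t"
    proof -
      have "m = Gm i j + (mv (Z i k) + t)" using t by (simp add: L_def Gm_def add_ac)
      then show ?thesis by (metis add_diff_cancel_left')
    qed
    have e2: "m - Gm i k = mv (Z i j) + t"
    proof -
      have "m = Gm i k + (mv (Z i j) + t)" using t True by (simp add: L_def Gm_def add_ac)
      then show ?thesis by (metis add_diff_cancel_left')
    qed
    have eq: "qp GT (sg (mv (Z i k)) 1 * \<psi> (Gm i j)) = qp GT (sg (mv (Z i j)) 1 * \<psi> (Gm i k))"
      using LCM d True by blast
    have "qp GT (sg (m - Gm i j) 1 * \<psi> (Gm i j)) = qp GT (sg t 1 * (sg (mv (Z i k)) 1 * \<psi> (Gm i j)))"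
      unfolding e1 by (simp add: mult_single mult.assoc[symmetric] add.commute)
    also have "\<dots> = qp GT (sg t 1 * qp GT (sg (mv (Z i k)) 1 * \<psi> (Gm i j)))" by (simp add: qp_mult)
    also have "\<dots> = qp GT (sg t 1 * qp GT (sg (mv (Z i j)) 1 * \<psi> (Gm i k)))" by (simp add: eq)
    also have "\<dots> = qp GT (sg t 1 * (sg (mv (Z i j)) 1 * \<psi> (Gm i k)))" by (simp add: qp_mult)
    also have "\<dots> = qp GT (sg (m - Gm i k) 1 * \<psi> (Gm i k))"
      unfolding e2 by (simp add: mult_single mult.assoc[symmetric] add.commute)
    finally show ?thesis .
  qed
qed

lemma H3_disj:
  assumes "a \<noteq> b" "c \<noteq> d" "c \<noteq> a" "c \<noteq> b" "d \<noteq> a" "d \<noteq> b" "dv (Gm c d) m"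
  shows "qp GT (sg (m - Gm a b) 1 * \<psi> (Gm a b)) = 0"
proof -
  have l: "lk m (Z c d) \<ge> 1" "lk m (Z d c) \<ge> 1" using assms dv_Gm by auto
  have ne: "Z a b \<noteq> Z c d" "Z b a \<noteq> Z c d" "Z a b \<noteq> Z d c" "Z b a \<noteq> Z d c"
    using assms Z_ne_edge by metis+
  have "dv (Gm c d) (m - Gm a b)"
    using dv_Gm[of c d] assms l ne by (auto simp: lookup_minus_nat lk_Gm)
  then show ?thesis using qp_dv_zero Gm_in assms(2) by blast
qed

lemma H3_all:
  assumes LCM: "\<forall>i j k. i \<noteq> j \<longrightarrow> i \<noteq> k \<longrightarrow> j \<noteq> k \<longrightarrow> Z j i = Z k i \<longrightarrow>
      qp GT (sg (mv (Z i k)) 1 * \<psi> (Gm i j)) = qp GT (sg (mv (Z i j)) 1 * \<psi> (Gm i k))"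
  and g: "g \<in> GT" and h: "h \<in> GT" and m: "dv g m" "dv h m"
  shows "qp GT (sg (m - g) 1 * \<psi> g) = qp GT (sg (m - h) 1 * \<psi> h)"
proof -
  obtain a b where ab: "a \<noteq> b" "g = Gm a b" using g GT_def by blast
  obtain c d where cd: "c \<noteq> d" "h = Gm c d" using h GT_def by blast
  show ?thesis
  proof (cases "g = h")
    case True then show ?thesis by simp
  next
    case gh: False
    show ?thesis
    proof (cases "c \<in> {a,b} \<or> d \<in> {a,b}")
      case False
      then have "qp GT (sg (m - g) 1 * \<psi> g) = 0" using H3_disj[of a b c d m] ab cd m by auto
      moreover have "qp GT (sg (m - h) 1 * \<psi> h) = 0" using H3_disj[of c d a b m] ab cd m False by auto
      ultimately show ?thesis by simp
    next
      case True
      have "\<exists>i j k. g = Gm i j \<and> h = Gm i k \<and> i \<noteq> j \<and> i \<noteq> k \<and> j \<noteq> k"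
      proof -
        have "c = a \<or> c = b \<or> d = a \<or> d = b" using True by auto
        then show ?thesis
        proof (elim disjE)
          assume "c = a"
          then show ?thesis using ab cd gh by (intro exI[of _ a] exI[of _ b] exI[of _ d]) auto
        next
          assume "c = b"
          then show ?thesis using ab cd gh Gm_sym[of a b] by (intro exI[of _ b] exI[of _ a] exI[of _ d]) auto
        next
          assume "d = a"
          then show ?thesis using ab cd gh Gm_sym[of c d] by (intro exI[of _ a] exI[of _ b] exI[of _ c]) auto
        next
          assume "d = b"
          then show ?thesis using ab cd gh Gm_sym[of c d] Gm_sym[of a b] by (intro exI[of _ b] exI[of _ a] exI[of _ c]) auto
        qed
      qed
      then obtain i j k where ijk: "g = Gm i j" "h = Gm i k" "i \<noteq> j" "i \<noteq> k" "j \<noteq> k" by blast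
      show ?thesis using H3_share[OF LCM ijk(3-5)] m ijk(1,2) by simp
    qed
  qed
qed

end

context tree
begin

definition M1 :: "'e \<Rightarrow> 'e \<Rightarrow> 'e \<Rightarrow> 'e monom" where
  "M1 i j k = mv (W j i) + mv (Z i j) + mv (Z i k)"
definition M3 :: "'e \<Rightarrow> 'e \<Rightarrow> 'e \<Rightarrow> 'e monom" where
  "M3 i j k = mv (W j i) + mv (W i j) + mv (Z i k)"

lemma inI_M1:
  assumes "i \<noteq> j" "i \<noteq> k" "j \<noteq> k" "Z j i = Z k i"
  shows "inI GT (M1 i j k) \<longleftrightarrow> (Z i j = Z k j \<and> Z i k = Z j k)"
  unfolding M1_def using inI3[of "W j i" "Z i j" "Z i k"] assms by (auto simp: eq_commute)

lemma inI_M3: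
  assumes "i \<noteq> j" "i \<noteq> k" "j \<noteq> k" "Z j i = Z k i"
  shows "inI GT (M3 i j k) \<longleftrightarrow> (Z i j \<noteq> Z k j \<and> Z i k = Z j k)"
  unfolding M3_def using inI3[of "W j i" "W i j" "Z i k"] assms by (auto simp: eq_commute)

lemma M1_sym: "Z j i = Z k i \<Longrightarrow> M1 i k j = M1 i j k"
  unfolding M1_def W_def by (simp add: add_ac)

lemma qp_single_mult_Psi:
  assumes d: "i \<noteq> j" "i \<noteq> k" "j \<noteq> k" and e: "Z j i = Z k i"
  shows "qp GT (sg (mv (Z i k)) 1 * Psi c \<gamma> (Gm i j)) =
     (if inI GT (M1 i j k) then 0 else sg (M1 i j k) (c i j)) +
     (if inI GT (M3 i j k) then 0 else sg (M3 i j k) (\<gamma> i j + \<gamma> j i))"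
proof -
  define X2 where "X2 = mv (Z i k) + Am j i"
  have x2: "inI GT X2"
  proof -
    have ne: "Z i k \<noteq> Z j i" "Z i k \<noteq> W i j" using d Z_ne_edge W_ne_edge by metis+
    have "dv (Gm i k) X2"
      using dv_Gm[of i k] d e ne by (auto simp: X2_def Am_def lookup_add lk_mv)
    then show ?thesis using Gm_in d unfolding inI_def by blast
  qed
  have "sg (mv (Z i k)) 1 * Psi c \<gamma> (Gm i j) =
      sg (M1 i j k) (c i j) + sg (M3 i j k) (\<gamma> i j) + (sg X2 (c j i) + sg (M3 i j k) (\<gamma> j i))"
    unfolding Psi_G[OF d(1)] using Cm_sym[of j i]
    by (simp add: distrib_left mult_single M1_def M3_def X2_def Am_def Cm_def add_ac)
  then have "qp GT (sg (mv (Z i k)) 1 * Psi c \<gamma> (Gm i j)) =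
      qp GT (sg (M1 i j k) (c i j)) + qp GT (sg (M3 i j k) (\<gamma> i j)) + (qp GT (sg X2 (c j i)) + qp GT (sg (M3 i j k) (\<gamma> j i)))"
    by (simp add: qp_add)
  also have "\<dots> = (if inI GT (M1 i j k) then 0 else sg (M1 i j k) (c i j)) +
     (if inI GT (M3 i j k) then 0 else sg (M3 i j k) (\<gamma> i j + \<gamma> j i))"
    using x2 by (simp add: qp_single single_add)
  finally show ?thesis .
qed

lemma Psi_LCM:
  assumes d: "i \<noteq> j" "i \<noteq> k" "j \<noteq> k" and e: "Z j i = Z k i"
   and h1: "\<not> inI GT (M1 i j k) \<Longrightarrow> c i j = c i k"
   and h2: "\<not> inI GT (M3 i j k) \<Longrightarrow> \<gamma> i j + \<gamma> j i = 0"
   and h3: "\<not> inI GT (M3 i k j) \<Longrightarrow> \<gamma> i k + \<gamma> k i = 0"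
  shows "qp GT (sg (mv (Z i k)) 1 * Psi c \<gamma> (Gm i j)) = qp GT (sg (mv (Z i j)) 1 * Psi c \<gamma> (Gm i k))"
  unfolding qp_single_mult_Psi[OF d e] qp_single_mult_Psi[OF d(2) d(1) d(3)[symmetric] e[symmetric]]
    M1_sym[OF e] using h1 h2 h3 by simp

lemma Psi_Comp:
  assumes CL1: "\<And>i j k. i \<noteq> j \<Longrightarrow> i \<noteq> k \<Longrightarrow> j \<noteq> k \<Longrightarrow> Z j i = Z k i \<Longrightarrow> \<not> inI GT (M1 i j k) \<Longrightarrow> c i j = c i k"
  and CL2: "\<And>i j k. i \<noteq> j \<Longrightarrow> i \<noteq> k \<Longrightarrow> j \<noteq> k \<Longrightarrow> Z j i = Z k i \<Longrightarrow> \<not> inI GT (M3 i j k) \<Longrightarrow> \<gamma> i j + \<gamma> j i = 0"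
  shows "Comp GT (Psi c \<gamma>)"
proof -
  have LCM: "\<forall>i j k. i \<noteq> j \<longrightarrow> i \<noteq> k \<longrightarrow> j \<noteq> k \<longrightarrow> Z j i = Z k i \<longrightarrow>
      qp GT (sg (mv (Z i k)) 1 * Psi c \<gamma> (Gm i j)) = qp GT (sg (mv (Z i j)) 1 * Psi c \<gamma> (Gm i k))"
  proof (intro allI impI)
    fix i j k assume d: "i \<noteq> j" "i \<noteq> k" "j \<noteq> k" "Z j i = Z k i"
    show "qp GT (sg (mv (Z i k)) 1 * Psi c \<gamma> (Gm i j)) = qp GT (sg (mv (Z i j)) 1 * Psi c \<gamma> (Gm i k))"
      by (rule Psi_LCM[OF d]) (use CL1[OF d] CL2[OF d] CL2[OF d(2) d(1) d(3)[symmetric] d(4)[symmetric]] in auto)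
  qed
  show ?thesis unfolding Comp_def
    using Psi_H1 Psi_H2 H3_all[OF LCM] by blast
qed

lemma LCM_deriv:
  assumes C: "Comp GT \<psi>" and d: "i \<noteq> j" "i \<noteq> k" "j \<noteq> k" and e: "Z j i = Z k i"
  shows "(\<not> inI GT (M1 i j k) \<longrightarrow> lk (\<psi> (Gm i j)) (Am i j) = lk (\<psi> (Gm i k)) (Am i k)) \<and>
         (\<not> inI GT (M3 i j k) \<longrightarrow> lk (\<psi> (Gm i j)) (Cm i j) = 0)"
proof -
  define m0 where "m0 = mv (Z j i) + mv (Z i j) + mv (Z i k)"
  have m1: "m0 = Gm i j + mv (Z i k)" by (simp add: m0_def Gm_def add_ac)
  have m2: "m0 = Gm i k + mv (Z i j)" using e by (simp add: m0_def Gm_def add_ac)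
  have E: "qp GT (sg (mv (Z i k)) 1 * \<psi> (Gm i j)) = qp GT (sg (mv (Z i j)) 1 * \<psi> (Gm i k))"
  proof -
    have r1: "m0 - Gm i j = mv (Z i k)" using m1 by simp
    have r2: "m0 - Gm i k = mv (Z i j)" using m2 by simp
    have "dv (Gm i j) m0" "dv (Gm i k) m0" using m1 m2 dv_plus by metis+
    then show ?thesis using Comp_H3[OF C Gm_in[OF d(1)] Gm_in[OF d(2)], of m0] r1 r2 by simp
  qed
  have a1: "M1 i j k = mv (Z i k) + Am i j" by (simp add: M1_def Am_def add_ac)
  have a2: "M1 i j k = mv (Z i j) + Am i k" using e by (simp add: M1_def Am_def W_def add_ac)
  have a3: "M3 i j k = mv (Z i k) + Cm i j" by (simp add: M3_def Cm_def add_ac)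
  have nd: "\<not> dv (mv (Z i j)) (M3 i j k)"
  proof
    assume "dv (mv (Z i j)) (M3 i j k)"
    then have "lk (mv (Z i j)) (Z i j) \<le> lk (M3 i j k) (Z i j)" unfolding dv_lookup by blast
    moreover have "Z i j \<noteq> W j i" "Z i j \<noteq> Z i k" using d Z_ne_edge W_ne_edge by metis+
    ultimately show False by (simp add: M3_def lookup_add lk_mv)
  qed
  have L1: "lk (qp GT (sg (mv (Z i k)) 1 * \<psi> (Gm i j))) (M1 i j k) = lk (qp GT (sg (mv (Z i j)) 1 * \<psi> (Gm i k))) (M1 i j k)"
    using E by simp
  have L3: "lk (qp GT (sg (mv (Z i k)) 1 * \<psi> (Gm i j))) (M3 i j k) = lk (qp GT (sg (mv (Z i j)) 1 * \<psi> (Gm i k))) (M3 i j k)"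
    using E by simp
  show ?thesis
  proof (intro conjI impI)
    assume "\<not> inI GT (M1 i j k)"
    then show "lk (\<psi> (Gm i j)) (Am i j) = lk (\<psi> (Gm i k)) (Am i k)"
      using L1 unfolding lookup_qp lookup_single_mult
      by (metis a1 a2 add_diff_cancel_left' dv_plus mult_1)
  next
    assume "\<not> inI GT (M3 i j k)"
    then show "lk (\<psi> (Gm i j)) (Cm i j) = 0"
      using L3 nd unfolding lookup_qp lookup_single_mult
      by (metis a3 add_diff_cancel_left' dv_plus mult_1)
  qed
qed

end

context tree
begin

definition E :: "'v \<Rightarrow> 'e set" where "E v = {e. inc e v}"

definition adjacent :: "'e \<Rightarrow> 'e \<Rightarrow> bool" where
  "adjacent i j \<longleftrightarrow> i \<noteq> j \<and> (\<exists>v. inc i v \<and> inc j v)"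

definition D1 :: "('e \<times> 'e) set" where "D1 = {(i,j). adjacent i j}"
definition D2 :: "'v set" where "D2 = {v. card (E v) = 2}"

definition pr :: "'v \<Rightarrow> 'e \<times> 'e" where "pr v = (SOME p. fst p \<noteq> snd p \<and> E v = {fst p, snd p})"

lemma pr_spec: "v \<in> D2 \<Longrightarrow> fst (pr v) \<noteq> snd (pr v) \<and> E v = {fst (pr v), snd (pr v)}"
proof -
  assume "v \<in> D2"
  then obtain a b where "a \<noteq> b" "E v = {a, b}" unfolding D2_def by (auto simp: card_2_iff)
  then have "\<exists>p. fst p \<noteq> snd p \<and> E v = {fst p, snd p}" by (intro exI[of _ "(a,b)"]) simp
  then show ?thesis unfolding pr_def by (rule someI_ex)
qed

definition cB :: "('e \<times> 'e) + 'v \<Rightarrow> 'e \<Rightarrow> 'e \<Rightarrow> 'k::field" where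
  "cB d i k = (case d of Inl p \<Rightarrow> (if i = fst p \<and> k \<noteq> i \<and> br i k = snd p then 1 else 0) | Inr v \<Rightarrow> 0)"

definition \<gamma>B :: "('e \<times> 'e) + 'v \<Rightarrow> 'e \<Rightarrow> 'e \<Rightarrow> 'k::field" where
  "\<gamma>B d a b = (case d of Inl p \<Rightarrow> 0 | Inr v \<Rightarrow> (if a = fst (pr v) \<and> b = snd (pr v) then 1 else 0))"

definition \<psi>B :: "('e \<times> 'e) + 'v \<Rightarrow> 'e monom \<Rightarrow> ('e, 'k::field) mpoly" where
  "\<psi>B d = Psi (cB d) (\<gamma>B d)"

definition DD :: "(('e \<times> 'e) + 'v) set" where "DD = Inl ` D1 \<union> Inr ` D2"

definition evl :: "('e \<times> 'e) + 'v \<Rightarrow> (('e, 'k::field) mpoly \<Rightarrow> ('e, 'k) mpoly) \<Rightarrow> 'k" where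
  "evl d \<phi> = (case d of Inl p \<Rightarrow> lk (\<phi> (sg (Gm (fst p) (snd p)) 1)) (Am (fst p) (snd p))
     | Inr v \<Rightarrow> lk (\<phi> (sg (Gm (fst (pr v)) (snd (pr v))) 1)) (Cm (fst (pr v)) (snd (pr v))))"

lemma S_Z: "S a b = S c b \<longleftrightarrow> Z a b = Z c b" by (simp add: Z_eq)

lemma inI_M1_S:
  assumes "i \<noteq> j" "i \<noteq> k" "j \<noteq> k" "Z j i = Z k i"
  shows "inI GT (M1 i j k) \<longleftrightarrow> (S i j = S k j \<and> S i k = S j k)"
  using inI_M1[OF assms] by (simp add: S_Z)

lemma inI_M3_S:
  assumes "i \<noteq> j" "i \<noteq> k" "j \<noteq> k" "Z j i = Z k i"
  shows "inI GT (M3 i j k) \<longleftrightarrow> (S i j \<noteq> S k j \<and> S i k = S j k)"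
  using inI_M3[OF assms] by (simp add: S_Z)

lemma Comp_B: "d \<in> DD \<Longrightarrow> Comp GT (\<psi>B d :: _ \<Rightarrow> ('e, 'k::field) mpoly)"
  unfolding \<psi>B_def
proof (rule Psi_Comp)
  fix i j k assume d: "i \<noteq> j" "i \<noteq> k" "j \<noteq> k" "Z j i = Z k i" and n: "\<not> inI GT (M1 i j k)"
  have s: "S j i = S k i" using d(4) by (simp add: S_Z)
  have "\<not> (S i j = S k j \<and> S i k = S j k)" using n inI_M1_S[OF d] by simp
  then have "br i j = br i k" using BRsame[OF d(1-3) s] by blast
  then show "cB d i j = cB d i k" using d by (simp add: cB_def split: sum.splits)
next
  fix i j k assume d: "i \<noteq> j" "i \<noteq> k" "j \<noteq> k" "Z j i = Z k i" and n: "\<not> inI GT (M3 i j k)"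
  assume dD: "d \<in> DD"
  show "\<gamma>B d i j + \<gamma>B d j i = (0::'k)"
  proof (cases d)
    case (Inl p) then show ?thesis by (simp add: \<gamma>B_def)
  next
    case (Inr v)
    then have v: "v \<in> D2" using dD by (auto simp: DD_def)
    have pv: "fst (pr v) \<noteq> snd (pr v)" "E v = {fst (pr v), snd (pr v)}" using pr_spec[OF v] by auto
    show ?thesis
    proof (rule ccontr)
      assume "\<gamma>B d i j + \<gamma>B d j i \<noteq> (0::'k)"
      then have ij: "E v = {i, j}" using pv Inr by (auto simp: \<gamma>B_def split: if_splits)
      have inc: "inc i v" "inc j v" "\<forall>e. inc e v \<longrightarrow> e = i \<or> e = j" using ij unfolding E_def by auto
      have s: "S j i = S k i" using d(4) by (simp add: S_Z)
      have "S i j \<noteq> S k j \<and> S i k = S j k" using C2[OF d(1) inc d(2)[symmetric] d(3)[symmetric] s] .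
      then show False using n inI_M3_S[OF d] by simp
    qed
  qed
qed

lemma Am_ne:
  assumes "i \<noteq> j"
  shows "Am i j \<noteq> Am j i" "Am i j \<noteq> Cm i j" "Am j i \<noteq> Cm i j"
proof -
  have n1: "W j i \<noteq> Z i j" using W_ne_edge[of i j j i] assms by auto
  have n2: "W i j \<noteq> Z j i" using W_ne_edge[of j i i j] assms by auto
  have n3: "Z j i \<noteq> Z i j" using Z_ne_edge[of i j j i] assms by auto
  have ne: "Z i j \<noteq> W j i" "Z i j \<noteq> Z j i" "Z j i \<noteq> W i j" "W i j \<noteq> Z i j" "W j i \<noteq> Z i j"
    using n1 n2 n3 by auto
  have a: "lk (Am i j) (Z i j) = 1" using n1 by (simp add: Am_def lookup_add lk_mv)
  have b: "lk (Am j i) (Z i j) = 0" using ne by (simp add: Am_def lookup_add lk_mv)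
  have c: "lk (Cm i j) (Z i j) = 0" using ne by (simp add: Cm_def lookup_add lk_mv)
  have a': "lk (Am j i) (Z j i) = 1" using n2 by (simp add: Am_def lookup_add lk_mv)
  have c': "lk (Cm i j) (Z j i) = 0" using assms Z_ne_edge W_ne_edge
    by (simp add: Cm_def lookup_add lk_mv)
  show "Am i j \<noteq> Am j i" using a b by auto
  show "Am i j \<noteq> Cm i j" using a c by auto
  show "Am j i \<noteq> Cm i j" using a' c' by auto
qed

lemma lk_Psi_Am: assumes "i \<noteq> j" shows "lk (Psi c \<gamma> (Gm i j)) (Am i j) = c i j"
  unfolding lk_Psi_G[OF assms] using Am_ne[OF assms] by auto

lemma lk_Psi_Cm: assumes "i \<noteq> j" shows "lk (Psi c \<gamma> (Gm i j)) (Cm i j) = \<gamma> i j + \<gamma> j i"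
  unfolding lk_Psi_G[OF assms] using Am_ne[OF assms] by auto

lemma D1_adj: "(i,j) \<in> D1 \<Longrightarrow> i \<noteq> j \<and> br i j = j"
  unfolding D1_def adjacent_def using br_adj by auto

lemma evl_B:
  assumes "d \<in> DD" "d' \<in> DD"
  shows "evl d (Ext GT (\<psi>B d')) = (if d = d' then 1 else (0::'k::field))"
proof (cases d)
  case (Inl p)
  obtain i j where p: "p = (i,j)" by (cases p)
  have ij: "i \<noteq> j" "br i j = j" using D1_adj assms(1) Inl p by (auto simp: DD_def)
  have E: "Ext GT (\<psi>B d') (sg (Gm i j) 1) = (\<psi>B d' (Gm i j) :: ('e,'k) mpoly)"
    by (rule Ext_gen[OF Comp_B[OF assms(2)] Gm_in[OF ij(1)]])
  have "evl d (Ext GT (\<psi>B d') :: _ \<Rightarrow> ('e, 'k) mpoly) = lk (Ext GT (\<psi>B d') (sg (Gm i j) 1) :: ('e,'k) mpoly) (Am i j)"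
    using Inl p by (simp add: evl_def)
  also have "\<dots> = lk (\<psi>B d' (Gm i j) :: ('e,'k) mpoly) (Am i j)" by (simp only: E)
  also have "\<dots> = cB d' i j" unfolding \<psi>B_def by (simp add: lk_Psi_Am[OF ij(1)])
  also have "\<dots> = (if d = d' then 1 else 0)" using ij Inl p by (auto simp: cB_def split: sum.splits)
  finally show ?thesis .
next
  case (Inr v)
  have v: "v \<in> D2" using assms(1) Inr by (auto simp: DD_def)
  define a b where "a = fst (pr v)" "b = snd (pr v)"
  have ab: "a \<noteq> b" "E v = {a,b}" using pr_spec[OF v] a_b_def by auto
  have E: "Ext GT (\<psi>B d') (sg (Gm a b) 1) = (\<psi>B d' (Gm a b) :: ('e,'k) mpoly)"
    by (rule Ext_gen[OF Comp_B[OF assms(2)] Gm_in[OF ab(1)]])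
  have "evl d (Ext GT (\<psi>B d') :: _ \<Rightarrow> ('e, 'k) mpoly) = lk (Ext GT (\<psi>B d') (sg (Gm a b) 1) :: ('e,'k) mpoly) (Cm a b)"
    using Inr by (simp add: evl_def a_b_def)
  also have "\<dots> = lk (\<psi>B d' (Gm a b) :: ('e,'k) mpoly) (Cm a b)" by (simp only: E)
  also have "\<dots> = \<gamma>B d' a b + \<gamma>B d' b a" unfolding \<psi>B_def by (simp add: lk_Psi_Cm[OF ab(1)])
  also have "\<dots> = (if d = d' then 1 else 0)"
  proof (cases d')
    case (Inl q) then show ?thesis using \<open>d = Inr v\<close> by (simp add: \<gamma>B_def)
  next
    case (Inr w)
    have dv: "d = Inr v" by fact
    have w: "w \<in> D2" using assms(2) Inr by (auto simp: DD_def)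
    have pw: "E w = {fst (pr w), snd (pr w)}" using pr_spec[OF w] by auto
    show ?thesis
    proof (cases "w = v")
      case True
      have "\<gamma>B d' a b = (1::'k)" unfolding \<gamma>B_def Inr True a_b_def by simp
      moreover have "\<gamma>B d' b a = (0::'k)" unfolding \<gamma>B_def Inr True a_b_def using ab(1) a_b_def by auto
      ultimately show ?thesis using dv Inr True by simp
    next
      case False
      have iv: "inc a v" "inc b v" using ab(2) unfolding E_def by auto
      have n1: "\<not> (a = fst (pr w) \<and> b = snd (pr w))"
      proof
        assume "a = fst (pr w) \<and> b = snd (pr w)"
        then have "inc a w" "inc b w" using pw unfolding E_def by auto
        then have "v = w" using share_unique[OF ab(1) iv] by simp
        then show False using False by simp
      qed
      have n2: "\<not> (b = fst (pr w) \<and> a = snd (pr w))"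
      proof
        assume "b = fst (pr w) \<and> a = snd (pr w)"
        then have "inc a w" "inc b w" using pw unfolding E_def by auto
        then have "v = w" using share_unique[OF ab(1) iv] by simp
        then show False using False by simp
      qed
      have "\<gamma>B d' a b = (0::'k)" "\<gamma>B d' b a = (0::'k)" unfolding \<gamma>B_def Inr using n1 n2 by auto
      then show ?thesis using dv Inr False by simp
    qed
  qed
  finally show ?thesis .
qed

end

context tree
begin

lemma ceq:
  assumes C: "Comp GT \<psi>" and ij: "i \<noteq> j"
  shows "lk (\<psi> (Gm i (br i j))) (Am i (br i j)) = lk (\<psi> (Gm i j)) (Am i j)"
proof -
  define k where "k = br i j"
  have bb: "inc (br i j) (xo i j) \<and> br i j \<noteq> i \<and> (br i j = j \<or> S i (br i j) \<noteq> S j (br i j)) \<and> S (br i j) i = S j i"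
    using BR1[OF not_sym[OF ij]] .
  have b: "k \<noteq> i" "k = j \<or> S i k \<noteq> S j k" "S k i = S j i"
    using bb unfolding k_def by blast+
  show ?thesis
  proof (cases "k = j")
    case True then show ?thesis using k_def by simp
  next
    case False
    have d: "i \<noteq> j" "i \<noteq> k" "j \<noteq> k" "Z j i = Z k i" using ij b False by (auto simp: S_Z)
    have "\<not> inI GT (M1 i j k)" using inI_M1_S[OF d] b False by auto
    then show ?thesis using LCM_deriv[OF C d] k_def by simp
  qed
qed

lemma card_E_ge3:
  assumes "i \<noteq> j" "inc i v" "inc j v" "card (E v) \<noteq> 2"
  shows "\<exists>k. k \<noteq> i \<and> k \<noteq> j \<and> inc k v"
proof (rule ccontr)
  assume "\<not> (\<exists>k. k \<noteq> i \<and> k \<noteq> j \<and> inc k v)"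
  then have "E v = {i, j}" using assms unfolding E_def by auto
  then show False using assms by simp
qed

lemma gzero:
  assumes C: "Comp GT \<psi>" and ij: "i \<noteq> j" and n: "\<not> (\<exists>v\<in>D2. inc i v \<and> inc j v)"
  shows "lk (\<psi> (Gm i j)) (Cm i j) = 0"
proof (cases "\<exists>v. inc i v \<and> inc j v")
  case False
  then obtain k where k: "k \<noteq> i" "k \<noteq> j" "S j i = S k i" "S i k \<noteq> S j k" using C1a[OF ij] by blast
  have d: "i \<noteq> j" "i \<noteq> k" "j \<noteq> k" "Z j i = Z k i" using ij k by (auto simp: S_Z)
  have "\<not> inI GT (M3 i j k)" using inI_M3_S[OF d] k by auto
  then show ?thesis using LCM_deriv[OF C d] by simp
next
  case True
  then obtain v where v: "inc i v" "inc j v" by blast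
  then have "card (E v) \<noteq> 2" using n unfolding D2_def by auto
  then obtain k where k: "k \<noteq> i" "k \<noteq> j" "inc k v" using card_E_ge3 ij v by blast
  have s: "S j i = S k i \<and> S i j = S k j" using C1b[of i j k v] ij k v by auto
  have d: "i \<noteq> j" "i \<noteq> k" "j \<noteq> k" "Z j i = Z k i" using ij k s by (auto simp: S_Z)
  have "\<not> inI GT (M3 i j k)" using inI_M3_S[OF d] s by auto
  then show ?thesis using LCM_deriv[OF C d] by simp
qed

lemma finite_DD: "finite D1" "finite (D2 :: 'v set) \<or> True" by (auto simp: D1_def)

lemma sum_DD:
  assumes "finite (UNIV :: 'v set)"
  shows "(\<Sum>d\<in>DD. f d) = (\<Sum>p\<in>D1. f (Inl p)) + (\<Sum>v\<in>D2. f (Inr v))"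
proof -
  have "(\<Sum>d\<in>DD. f d) = (\<Sum>d\<in>Inl ` D1. f d) + (\<Sum>d\<in>Inr ` D2. f d)"
  proof -
    have "finite D2" using assms by (rule finite_subset[OF subset_UNIV])
    then show ?thesis unfolding DD_def by (intro sum.union_disjoint) (auto simp: D1_def)
  qed
  also have "\<dots> = (\<Sum>p\<in>D1. f (Inl p)) + (\<Sum>v\<in>D2. f (Inr v))"
    by (simp add: sum.reindex)
  finally show ?thesis .
qed

lemma sum_c:
  assumes fin: "finite (UNIV :: 'v set)" and ij: "i \<noteq> j"
  shows "(\<Sum>d\<in>DD. a d * cB d i j) = (a (Inl (i, br i j)) :: 'k::field)"
proof -
  have mem: "(i, br i j) \<in> D1"
    using br_adjacent[OF not_sym[OF ij]] unfolding D1_def adjacent_def by auto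
  have "(\<Sum>d\<in>DD. a d * cB d i j) = (\<Sum>p\<in>D1. a (Inl p) * cB (Inl p) i j) + (\<Sum>v\<in>D2. a (Inr v) * cB (Inr v) i j)"
    using sum_DD[OF fin] .
  also have "\<dots> = (\<Sum>p\<in>D1. if p = (i, br i j) then a (Inl p) else 0)"
  proof -
    have 1: "(\<Sum>v\<in>D2. a (Inr v) * cB (Inr v) i j) = 0" by (simp add: cB_def)
    have 2: "(\<Sum>p\<in>D1. a (Inl p) * cB (Inl p) i j) = (\<Sum>p\<in>D1. if p = (i, br i j) then a (Inl p) else 0)"
    proof (rule sum.cong)
      fix p :: "'e \<times> 'e" obtain x y where p: "p = (x,y)" by (cases p)
      show "a (Inl p) * cB (Inl p) i j = (if p = (i, br i j) then a (Inl p) else 0)"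
        using ij unfolding p cB_def by auto
    qed simp
    show ?thesis using 1 2 by simp
  qed
  also have "\<dots> = a (Inl (i, br i j))" using mem by (simp add: D1_def)
  finally show ?thesis .
qed

lemma gam_pair:
  assumes "v \<in> D2" "i \<noteq> j"
  shows "\<gamma>B (Inr v) i j + \<gamma>B (Inr v) j i = (if E v = {i,j} then 1 else (0::'k::field))"
proof -
  have p: "fst (pr v) \<noteq> snd (pr v)" "E v = {fst (pr v), snd (pr v)}" using pr_spec[OF assms(1)] by auto
  show ?thesis using p assms(2) unfolding \<gamma>B_def by (auto simp: doubleton_eq_iff)
qed

lemma sum_g:
  assumes fin: "finite (UNIV :: 'v set)" and ij: "i \<noteq> j"
  notes fD2 = finite_subset[OF subset_UNIV fin, of D2]
  shows "(\<Sum>d\<in>DD. a d * (\<gamma>B d i j + \<gamma>B d j i)) =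
    (if \<exists>v\<in>D2. inc i v \<and> inc j v then a (Inr (THE v. v \<in> D2 \<and> inc i v \<and> inc j v)) else (0::'k::field))"
proof -
  have "(\<Sum>d\<in>DD. a d * (\<gamma>B d i j + \<gamma>B d j i)) =
      (\<Sum>p\<in>D1. a (Inl p) * (\<gamma>B (Inl p) i j + \<gamma>B (Inl p) j i)) + (\<Sum>v\<in>D2. a (Inr v) * (\<gamma>B (Inr v) i j + \<gamma>B (Inr v) j i))"
    using sum_DD[OF fin] .
  also have "\<dots> = (\<Sum>v\<in>D2. if E v = {i,j} then a (Inr v) else 0)"
  proof -
    have 1: "(\<Sum>p\<in>D1. a (Inl p) * (\<gamma>B (Inl p) i j + \<gamma>B (Inl p) j i)) = 0" by (simp add: \<gamma>B_def)
    have 2: "(\<Sum>v\<in>D2. a (Inr v) * (\<gamma>B (Inr v) i j + \<gamma>B (Inr v) j i)) = (\<Sum>v\<in>D2. if E v = {i,j} then a (Inr v) else 0)"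
      by (rule sum.cong) (simp_all add: gam_pair[OF _ ij])
    show ?thesis using 1 2 by simp
  qed
  also have "\<dots> = (if \<exists>v\<in>D2. inc i v \<and> inc j v then a (Inr (THE v. v \<in> D2 \<and> inc i v \<and> inc j v)) else 0)"
  proof (cases "\<exists>v\<in>D2. inc i v \<and> inc j v")
    case True
    then obtain v0 where v0: "v0 \<in> D2" "inc i v0" "inc j v0" by blast
    have uniq: "\<And>v. inc i v \<Longrightarrow> inc j v \<Longrightarrow> v = v0" using share_unique[OF ij] v0 by blast
    have th: "(THE v. v \<in> D2 \<and> inc i v \<and> inc j v) = v0" using v0 uniq by blast
    have Ev0: "E v0 = {i,j}"
    proof -
      have "{i,j} \<subseteq> E v0" using v0 unfolding E_def by auto
      moreover have "card (E v0) = 2" using v0 unfolding D2_def by auto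
      moreover have "card {i,j} = 2" using ij by simp
      moreover have "finite (E v0)" by simp
      ultimately show ?thesis using card_subset_eq[of "E v0" "{i,j}"] by simp
    qed
    have "v = v0" if "v \<in> D2" "E v = {i,j}" for v
    proof -
      have "i \<in> E v" "j \<in> E v" using that by auto
      then show ?thesis using uniq unfolding E_def by blast
    qed
    then have eqv: "\<And>v. v \<in> D2 \<Longrightarrow> (E v = {i,j}) = (v = v0)" using Ev0 by blast
    have "(\<Sum>v\<in>D2. if E v = {i,j} then a (Inr v) else 0) = (\<Sum>v\<in>D2. if v = v0 then a (Inr v) else 0)"
      by (rule sum.cong[OF refl]) (simp add: eqv)
    also have "\<dots> = a (Inr v0)" using v0(1) fD2 by (simp add: sum.delta)
    finally show ?thesis using True th by simp
  next
    case False
    have "E v \<noteq> {i,j}" if "v \<in> D2" for v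
    proof
      assume "E v = {i,j}"
      then have "i \<in> E v" "j \<in> E v" by auto
      then show False using False that unfolding E_def by blast
    qed
    then have "(\<Sum>v\<in>D2. if E v = {i,j} then a (Inr v) else 0) = (\<Sum>v\<in>D2. 0)"
      by (intro sum.cong) auto
    moreover have "(if \<exists>v\<in>D2. inc i v \<and> inc j v then a (Inr (THE v. v \<in> D2 \<and> inc i v \<and> inc j v)) else 0) = 0"
      using False by (rule if_not_P)
    ultimately show ?thesis by simp
  qed
  finally show ?thesis .
qed

end

context tree
begin

lemma psi_decomp:
  assumes fin: "finite (UNIV :: 'v set)" and C: "Comp GT \<psi>"
    and ha: "\<And>d. a d = (case d of Inl p \<Rightarrow> lk (\<psi> (Gm (fst p) (snd p))) (Am (fst p) (snd p))
        | Inr v \<Rightarrow> lk (\<psi> (Gm (fst (pr v)) (snd (pr v)))) (Cm (fst (pr v)) (snd (pr v))))"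
    and g: "g \<in> GT"
  shows "\<psi> g = (\<Sum>d\<in>DD. sg 0 (a d) * (\<psi>B d g :: ('e, 'k::field) mpoly))"
proof -
  obtain i j where ij: "i \<noteq> j" "g = Gm i j" using g GT_def by blast
  have ne: "Am i j \<noteq> Am j i" "Am i j \<noteq> Cm i j" "Am j i \<noteq> Cm i j" using Am_ne[OF ij(1)] by auto
  show ?thesis
  proof (rule poly_mapping_eqI)
    fix M
    have R: "lk (\<Sum>d\<in>DD. sg 0 (a d) * (\<psi>B d g :: ('e, 'k) mpoly)) M =
      (\<Sum>d\<in>DD. a d * ((if M = Am i j then cB d i j else 0) + (if M = Am j i then cB d j i else 0)
     + (if M = Cm i j then \<gamma>B d i j + \<gamma>B d j i else 0)))"
      unfolding lookup_sum ij(2) \<psi>B_def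
      by (intro sum.cong refl) (simp add: lookup_single_mult dv_def lk_Psi_G[OF ij(1)])
    consider "M = Am i j" | "M = Am j i" | "M = Cm i j" | "M \<noteq> Am i j" "M \<noteq> Am j i" "M \<noteq> Cm i j" by blast
    then show "lk (\<psi> g) M = lk (\<Sum>d\<in>DD. sg 0 (a d) * \<psi>B d g) M"
    proof cases
      case 1
      have "lk (\<Sum>d\<in>DD. sg 0 (a d) * (\<psi>B d g :: ('e, 'k) mpoly)) M = (\<Sum>d\<in>DD. a d * cB d i j)"
        unfolding R using 1 ne by simp
      also have "\<dots> = a (Inl (i, br i j))" using sum_c[OF fin ij(1)] .
      also have "\<dots> = lk (\<psi> (Gm i j)) (Am i j)" using ha ceq[OF C ij(1)] by simp
      finally show ?thesis using 1 ij by simp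
    next
      case 2
      have "lk (\<Sum>d\<in>DD. sg 0 (a d) * (\<psi>B d g :: ('e, 'k) mpoly)) M = (\<Sum>d\<in>DD. a d * cB d j i)"
        unfolding R using 2 ne by simp
      also have "\<dots> = a (Inl (j, br j i))" using sum_c[OF fin not_sym[OF ij(1)]] .
      also have "\<dots> = lk (\<psi> (Gm j i)) (Am j i)" using ha ceq[OF C not_sym[OF ij(1)]] by simp
      finally show ?thesis using 2 ij Gm_sym[of i j] by simp
    next
      case 3
      have "lk (\<Sum>d\<in>DD. sg 0 (a d) * (\<psi>B d g :: ('e, 'k) mpoly)) M = (\<Sum>d\<in>DD. a d * (\<gamma>B d i j + \<gamma>B d j i))"
        unfolding R using 3 ne by simp
      also have "\<dots> = (if \<exists>v\<in>D2. inc i v \<and> inc j v then a (Inr (THE v. v \<in> D2 \<and> inc i v \<and> inc j v)) else 0)"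
        using sum_g[OF fin ij(1)] .
      also have "\<dots> = lk (\<psi> (Gm i j)) (Cm i j)"
      proof (cases "\<exists>v\<in>D2. inc i v \<and> inc j v")
        case True
        then obtain v0 where v0: "v0 \<in> D2" "inc i v0" "inc j v0" by blast
        have uniq: "\<And>v. inc i v \<Longrightarrow> inc j v \<Longrightarrow> v = v0" using share_unique[OF ij(1)] v0 by blast
        have th: "(THE v. v \<in> D2 \<and> inc i v \<and> inc j v) = v0" using v0 uniq by blast
        have p: "fst (pr v0) \<noteq> snd (pr v0)" "E v0 = {fst (pr v0), snd (pr v0)}" using pr_spec[OF v0(1)] by auto
        have "i \<in> E v0" "j \<in> E v0" using v0 unfolding E_def by auto
        then have "(fst (pr v0) = i \<and> snd (pr v0) = j) \<or> (fst (pr v0) = j \<and> snd (pr v0) = i)"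
          using p ij(1) by auto
        then have "lk (\<psi> (Gm (fst (pr v0)) (snd (pr v0)))) (Cm (fst (pr v0)) (snd (pr v0))) = lk (\<psi> (Gm i j)) (Cm i j)"
          using Gm_sym[of i j] Cm_sym[of i j] by auto
        then show ?thesis using True th ha[of "Inr v0"] by simp
      next
        case False
        have e: "(if \<exists>v\<in>D2. inc i v \<and> inc j v then a (Inr (THE v. v \<in> D2 \<and> inc i v \<and> inc j v)) else 0) = 0"
          by (rule if_not_P[OF False])
        show ?thesis unfolding e using gzero[OF C ij(1) False] by simp
      qed
      finally show ?thesis using 3 ij by simp
    next
      case 4
      have "lk (\<Sum>d\<in>DD. sg 0 (a d) * (\<psi>B d g :: ('e, 'k) mpoly)) M = 0"
        unfolding R using 4 by simp
      moreover have "lk (\<psi> g) M = 0"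
      proof (rule ccontr)
        assume nz: "lk (\<psi> g) M \<noteq> 0"
        then have "M \<in> ks (\<psi> g)" by (simp add: in_keys_iff)
        then have "mdeg M = mdeg (Gm i j)" using Comp_H2[OF C g] ij(2) by (simp add: homogeneous_def)
        then have "M = Gm i j" using shape[OF ij(1)] 4 by blast
        moreover have "lk (qp GT (\<psi> g)) M = lk (\<psi> g) M" using Comp_H1[OF C g] by simp
        ultimately show False using nz inI_Gm[OF ij(1)] by (simp add: lookup_qp)
      qed
      ultimately show ?thesis by simp
    qed
  qed
qed

lemma evl_lin:
  "evl d (\<Sum>v\<in>t. (\<lambda>p. smult_mp (u v) (v p))) = (\<Sum>v\<in>t. u v * evl d (v :: ('e, 'k::field) mpoly \<Rightarrow> _))"
  by (cases d) (simp_all add: evl_def sum_fun_apply lookup_sum)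

lemma evl_zero: "evl d (0 :: ('e, 'k::field) mpoly \<Rightarrow> _) = 0"
  by (cases d) (simp_all add: evl_def)

lemma dim_main:
  assumes fin: "finite (UNIV :: 'v set)"
  shows "tangent_dim (mideal GT :: ('e, 'k::field) mpoly set) = card DD"
proof -
  define sc where "sc = (\<lambda>(c::'k) (\<phi> :: ('e,'k) mpoly \<Rightarrow> ('e,'k) mpoly) p. smult_mp c (\<phi> p))"
  interpret V: vector_space sc unfolding sc_def by (rule vs_fun)
  define b where "b d = (Ext GT (\<psi>B d) :: ('e,'k) mpoly \<Rightarrow> ('e,'k) mpoly)" for d
  define T where "T = tangent_hom (mideal GT :: ('e, 'k) mpoly set)"
  have ev: "\<And>d d'. d \<in> DD \<Longrightarrow> d' \<in> DD \<Longrightarrow> evl d (b d') = (if d = d' then 1 else (0::'k))"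
    unfolding b_def by (rule evl_B)
  have inj: "inj_on b DD"
  proof (rule inj_onI)
    fix d d' assume d: "d \<in> DD" "d' \<in> DD" "b d = b d'"
    then have "evl d (b d) = evl d (b d')" by simp
    then show "d = d'" using ev[OF d(1) d(1)] ev[OF d(1) d(2)] by (auto split: if_splits)
  qed
  have BT: "b ` DD \<subseteq> T" unfolding T_def b_def using Ext_tangent[OF Comp_B] by blast
  have TB: "T \<subseteq> V.span (b ` DD)"
  proof
    fix \<phi> assume "\<phi> \<in> T"
    then have tE: "Comp GT (\<lambda>g. \<phi> (sg g 1)) \<and> Ext GT (\<lambda>g. \<phi> (sg g 1)) = \<phi>" unfolding T_def by (rule tangent_Ext)
    define a where "a d = evl d \<phi>" for d
    have "\<phi> = Ext GT (\<lambda>g. \<phi> (sg g 1))" using tE by simp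
    also have "\<dots> = Ext GT (\<lambda>g. \<Sum>d\<in>DD. sg 0 (a d) * \<psi>B d g)"
    proof (rule Ext_cong)
      fix g assume gG: "g \<in> GT"
      have ha: "\<And>d. a d = (case d of Inl p \<Rightarrow> lk ((\<lambda>g. \<phi> (sg g 1)) (Gm (fst p) (snd p))) (Am (fst p) (snd p))
        | Inr v \<Rightarrow> lk ((\<lambda>g. \<phi> (sg g 1)) (Gm (fst (pr v)) (snd (pr v)))) (Cm (fst (pr v)) (snd (pr v))))"
        unfolding a_def evl_def by simp
      show "\<phi> (sg g 1) = (\<Sum>d\<in>DD. sg 0 (a d) * \<psi>B d g)"
        using psi_decomp[OF fin conjunct1[OF tE] ha gG] by simp
    qed
    also have "\<dots> = (\<lambda>p. \<Sum>d\<in>DD. sg 0 (a d) * b d p)"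
      unfolding b_def by (rule ext) (rule Ext_lin)
    also have "\<dots> = (\<Sum>d\<in>DD. sc (a d) (b d))"
      by (rule ext) (simp add: sc_def sum_fun_apply smult_mp_conv)
    finally have phi: "\<phi> = (\<Sum>d\<in>DD. sc (a d) (b d))" .
    show "\<phi> \<in> V.span (b ` DD)"
      unfolding phi by (intro V.span_sum V.span_scale V.span_base) auto
  qed
  have indep: "V.independent (b ` DD)"
    unfolding V.dependent_explicit
  proof
    assume "\<exists>t u. finite t \<and> t \<subseteq> b ` DD \<and> (\<Sum>v\<in>t. sc (u v) v) = 0 \<and> (\<exists>v\<in>t. u v \<noteq> 0)"
    then obtain t u v0 where t: "finite t" "t \<subseteq> b ` DD" "(\<Sum>v\<in>t. sc (u v) v) = 0" "v0 \<in> t" "u v0 \<noteq> 0"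
      by blast
    obtain d0 where d0: "d0 \<in> DD" "v0 = b d0" using t by blast
    have "evl d0 (\<Sum>v\<in>t. sc (u v) v) = (\<Sum>v\<in>t. u v * evl d0 v)"
      unfolding sc_def by (rule evl_lin)
    also have "\<dots> = (\<Sum>v\<in>t. if v = v0 then u v else 0)"
    proof (rule sum.cong[OF refl])
      fix v assume "v \<in> t"
      then obtain d where d: "d \<in> DD" "v = b d" using t by blast
      have "evl d0 v = (if v = v0 then 1 else 0)"
        using ev[OF d0(1) d(1)] d d0 inj inj_on_eq_iff by fastforce
      then show "u v * evl d0 v = (if v = v0 then u v else 0)" by simp
    qed
    also have "\<dots> = u v0" using t by simp
    finally have f: "evl d0 (\<Sum>v\<in>t. sc (u v) v) = u v0" .
    have "evl d0 (0 :: ('e,'k) mpoly \<Rightarrow> ('e,'k) mpoly) = 0" by (rule evl_zero)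
    then have "u v0 = 0" using f t(3) by simp
    then show False using t(5) by simp
  qed
  have "V.span (b ` DD) = V.span T"
    unfolding V.span_eq using BT TB V.span_superset by blast
  then have "V.dim T = card (b ` DD)" using V.dim_eq_card indep by blast
  also have "\<dots> = card DD" using card_image[OF inj] .
  finally show ?thesis unfolding tangent_dim_def T_def sc_def .
qed

end

lemma card_offdiag:
  assumes "finite A"
  shows "card {(i,j). i \<in> A \<and> j \<in> A \<and> i \<noteq> j} = card A * (card A - 1)"
proof -
  have e: "{(i,j). i \<in> A \<and> j \<in> A \<and> i \<noteq> j} = A \<times> A - (\<lambda>x. (x,x)) ` A" by auto
  have "card ((\<lambda>x. (x,x)) ` A) = card A" by (rule card_image) (auto simp: inj_on_def)
  moreover have "(\<lambda>x. (x,x)) ` A \<subseteq> A \<times> A" by auto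
  ultimately have "card {(i,j). i \<in> A \<and> j \<in> A \<and> i \<noteq> j} = card A * card A - card A"
    unfolding e using assms by (simp add: card_Diff_subset card_cartesian_product)
  also have "\<dots> = card A * (card A - 1)" by (simp add: diff_mult_distrib2)
  finally show ?thesis .
qed

lemma f_loc_alt: "f_loc d = d * (d - 1) + (if d = 2 then 1 else 0)"
proof -
  consider "d = 0" | "d = 1" | "d = 2" | "d = 3" | "d > 3" by linarith
  then show ?thesis by cases (auto simp: f_loc_def)
qed

context tree
begin

lemma vdeg_E: "vdeg tail head v = card (E v)"
proof -
  have "E v = {e. tail e = v} \<union> {e. head e = v}" unfolding E_def inc_def by auto
  moreover have "{e. tail e = v} \<inter> {e. head e = v} = {}" using no_loop by (metis (mono_tags) disjoint_iff mem_Collect_eq)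
  ultimately show ?thesis unfolding vdeg_def by (simp add: card_Un_disjoint)
qed

lemma card_DD:
  assumes fin: "finite (UNIV :: 'v set)"
  shows "card DD = (\<Sum>v\<in>UNIV. f_loc (vdeg tail head v))"
proof -
  have fD2: "finite D2" using fin by (rule finite_subset[OF subset_UNIV])
  have fD1: "finite D1" by (simp add: D1_def)
  have c1: "card DD = card D1 + card D2"
  proof -
    have "card DD = card (Inl ` D1 :: (('e \<times> 'e) + 'v) set) + card (Inr ` D2 :: (('e \<times> 'e) + 'v) set)"
      unfolding DD_def by (rule card_Un_disjoint) (use fD1 fD2 in auto)
    then show ?thesis by (simp add: card_image)
  qed
  define P where "P v = {(i,j). i \<in> E v \<and> j \<in> E v \<and> i \<noteq> j}" for v
  have D1P: "D1 = (\<Union>v\<in>UNIV. P v)" unfolding D1_def P_def adjacent_def E_def by auto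
  have "card D1 = (\<Sum>v\<in>UNIV. card (P v))"
    unfolding D1P
  proof (rule card_UN_disjoint)
    show "finite (UNIV :: 'v set)" by (rule fin)
    show "\<forall>v\<in>UNIV. finite (P v)" by simp
    show "\<forall>v\<in>UNIV. \<forall>w\<in>UNIV. v \<noteq> w \<longrightarrow> P v \<inter> P w = {}"
    proof (intro ballI impI)
      fix v w :: 'v assume "v \<noteq> w"
      show "P v \<inter> P w = {}"
      proof (rule ccontr)
        assume "P v \<inter> P w \<noteq> {}"
        then obtain i j where "i \<noteq> j" "inc i v" "inc j v" "inc i w" "inc j w"
          unfolding P_def E_def by auto
        then show False using share_unique \<open>v \<noteq> w\<close> by blast
      qed
    qed
  qed
  also have "\<dots> = (\<Sum>v\<in>UNIV. vdeg tail head v * (vdeg tail head v - 1))"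
    unfolding P_def vdeg_E by (intro sum.cong refl card_offdiag) simp
  finally have c2: "card D1 = (\<Sum>v\<in>UNIV. vdeg tail head v * (vdeg tail head v - 1))" .
  have c3: "card D2 = (\<Sum>v\<in>UNIV. if vdeg tail head v = 2 then 1 else 0)"
  proof -
    have "card D2 = (\<Sum>v\<in>{v \<in> UNIV. vdeg tail head v = 2}. 1)"
      unfolding D2_def vdeg_E by simp
    also have "\<dots> = (\<Sum>v\<in>UNIV. if vdeg tail head v = 2 then 1 else 0)"
      using fin by (rule sum.inter_filter)
    finally show ?thesis .
  qed
  show ?thesis unfolding c1 c2 c3 f_loc_alt by (simp add: sum.distrib)
qed

end

theorem proposition4p6:
  fixes tail head :: "'e::finite \<Rightarrow> 'v::finite"
  assumes "card (UNIV :: 'v set) = card (UNIV :: 'e set) + 1"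
    and "is_tree tail head"
  shows "tangent_dim (I_T tail head :: ('e, 'k::field) mpoly set)
           = (\<Sum>v\<in>UNIV. f_loc (vdeg tail head v))"
proof -
  interpret tree tail head by unfold_locales (rule assms(2))
  have fin: "finite (UNIV :: 'v set)" by simp
  have "tangent_dim (I_T tail head :: ('e, 'k) mpoly set) = tangent_dim (mideal GT :: ('e, 'k) mpoly set)"
    by (simp add: I_T_eq)
  also have "\<dots> = card DD" by (rule dim_main[OF fin])
  also have "\<dots> = (\<Sum>v\<in>UNIV. f_loc (vdeg tail head v))" by (rule card_DD[OF fin])
  finally show ?thesis .
qed


end
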